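(* Let $\rho$ be a state of $A$ and $\sigma$ a state of $B$, and let $\mathcal{H}_S:=\mathrm{supp}\,\mathcal{G}(\sigma)\subseteq\mathcal{H}_B$, regarded as a system $S$ carrying the restriction of $U_B$ (this subspace is invariant under every $U_B(g)$). Then there exists a $G$-covariant channel from $A$ to $B$ mapping $\rho$ to $\sigma$ if and only if there exists a $G$-covariant channel from $A$ to $S$ mapping $\rho$ to $\sigma$.
   Context: $G$ is a compact group with normalized Haar measure $dg$; finite-dimensional systems $A,B$ carry continuous unitary representations $U_A,U_B$. $\mathcal{G}(\sigma)=\int dg\,U_B(g)\sigma U_B(g)^\dagger$. A channel $\mathcal{E}$ from $X$ to $Y$ is $G$-covariant if $\mathcal{E}(U_X(g)MU_X(g)^\dagger)=U_Y(g)\mathcal{E}(M)U_Y(g)^\dagger$ for all $g$ and $M$. *)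

theory Defs
  imports "HOL-Probability.Probability" "Jordan_Normal_Form.Matrix"
begin

definition adj :: "complex mat \<Rightarrow> complex mat" where
  "adj A = mat (dim_col A) (dim_row A) (\<lambda>(i,j). cnj (A $$ (j,i)))"

definition psd :: "nat \<Rightarrow> complex mat \<Rightarrow> bool" where
  "psd d M \<longleftrightarrow> M \<in> carrier_mat d d \<and>
     (\<forall>v \<in> carrier_vec d. let z = (\<Sum>i<d. cnj (vec_index v i) * vec_index (M *\<^sub>v v) i) in Im z = 0 \<and> Re z \<ge> 0)"

definition tr :: "complex mat \<Rightarrow> complex" where
  "tr M = (\<Sum>i<dim_row M. M $$ (i,i))"

definition state :: "nat \<Rightarrow> complex mat \<Rightarrow> bool" where
  "state d \<rho> \<longleftrightarrow> psd d \<rho> \<and> tr \<rho> = 1"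

(* range (support, for psd matrices) of a matrix *)
definition supp :: "complex mat \<Rightarrow> complex vec set" where
  "supp M = {M *\<^sub>v v | v. v \<in> carrier_vec (dim_col M)}"

(* (Phi \<otimes> id_n) applied to M on C^dX \<otimes> C^n, index of e_k \<otimes> e_a is k*n+a *)
definition ampl :: "nat \<Rightarrow> nat \<Rightarrow> nat \<Rightarrow> (complex mat \<Rightarrow> complex mat) \<Rightarrow> complex mat \<Rightarrow> complex mat" where
  "ampl dX dY n \<Phi> M = mat (dY * n) (dY * n)
     (\<lambda>(i,j). \<Phi> (mat dX dX (\<lambda>(k,l). M $$ (k * n + i mod n, l * n + j mod n))) $$ (i div n, j div n))"

definition channel :: "nat \<Rightarrow> nat \<Rightarrow> (complex mat \<Rightarrow> complex mat) \<Rightarrow> bool" where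
  "channel dX dY \<Phi> \<longleftrightarrow>
     (\<forall>M \<in> carrier_mat dX dX. \<Phi> M \<in> carrier_mat dY dY) \<and>
     (\<forall>M \<in> carrier_mat dX dX. \<forall>N \<in> carrier_mat dX dX. \<Phi> (M + N) = \<Phi> M + \<Phi> N) \<and>
     (\<forall>M \<in> carrier_mat dX dX. \<forall>c. \<Phi> (c \<cdot>\<^sub>m M) = c \<cdot>\<^sub>m \<Phi> M) \<and>
     (\<forall>M \<in> carrier_mat dX dX. tr (\<Phi> M) = tr M) \<and>
     (\<forall>n. \<forall>M. psd (dX * n) M \<longrightarrow> psd (dY * n) (ampl dX dY n \<Phi> M))"

definition unitary_rep :: "nat \<Rightarrow> ('g::{group_add,topological_space} \<Rightarrow> complex mat) \<Rightarrow> bool" where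
  "unitary_rep d U \<longleftrightarrow>
     (\<forall>g. U g \<in> carrier_mat d d \<and> adj (U g) * U g = 1\<^sub>m d) \<and>
     (\<forall>g h. U (g + h) = U g * U h) \<and>
     (\<forall>i<d. \<forall>j<d. continuous_on UNIV (\<lambda>g. U g $$ (i,j)))"

definition cov_channel :: "nat \<Rightarrow> nat \<Rightarrow> ('g \<Rightarrow> complex mat) \<Rightarrow> ('g \<Rightarrow> complex mat)
     \<Rightarrow> (complex mat \<Rightarrow> complex mat) \<Rightarrow> bool" where
  "cov_channel dX dY UX UY \<Phi> \<longleftrightarrow> channel dX dY \<Phi> \<and>
     (\<forall>g. \<forall>M \<in> carrier_mat dX dX. \<Phi> (UX g * M * adj (UX g)) = UY g * \<Phi> M * adj (UY g))"

definition haar_prob :: "('g::{group_add,topological_space}) measure \<Rightarrow> bool" where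
  "haar_prob \<mu> \<longleftrightarrow> prob_space \<mu> \<and> sets \<mu> = sets borel \<and>
     (\<forall>h. distr \<mu> \<mu> (\<lambda>g. h + g) = \<mu>) \<and>
     (\<forall>A \<in> sets borel. emeasure \<mu> A = (INF U \<in> {U. open U \<and> A \<subseteq> U}. emeasure \<mu> U)) \<and>
     (\<forall>U. open U \<longrightarrow> emeasure \<mu> U = (SUP K \<in> {K. compact K \<and> K \<subseteq> U}. emeasure \<mu> K))"

definition twirl :: "'g measure \<Rightarrow> ('g \<Rightarrow> complex mat) \<Rightarrow> complex mat \<Rightarrow> complex mat" where
  "twirl \<mu> U \<sigma> = mat (dim_row \<sigma>) (dim_col \<sigma>)
     (\<lambda>(i,j). integral\<^sup>L \<mu> (\<lambda>g. (U g * \<sigma> * adj (U g)) $$ (i,j)))"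

end

theory Submission
  imports Defs "Jordan_Normal_Form.Determinant"
begin


lemma mult_entry:
  assumes "A \<in> carrier_mat n m" "B \<in> carrier_mat m p" "i < n" "j < p"
  shows "(A * B) $$ (i,j) = (\<Sum>k<m. A $$ (i,k) * B $$ (k,j))"
  using assms by (auto simp: scalar_prod_def lessThan_atLeast0 intro!: sum.cong)

lemma mult_vec_entry:
  assumes "A \<in> carrier_mat n m" "v \<in> carrier_vec m" "i < n"
  shows "vec_index (A *\<^sub>v v) i = (\<Sum>k<m. A $$ (i,k) * vec_index v k)"
  using assms by (auto simp: scalar_prod_def lessThan_atLeast0 intro!: sum.cong)

lemma adj_carrier[simp]: "A \<in> carrier_mat n m \<Longrightarrow> adj A \<in> carrier_mat m n"
  by (auto simp: adj_def)

lemma adj_dims[simp]: "dim_row (adj A) = dim_col A" "dim_col (adj A) = dim_row A"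
  by (auto simp: adj_def)

lemma adj_entry[simp]: "i < dim_col A \<Longrightarrow> j < dim_row A \<Longrightarrow> adj A $$ (i,j) = cnj (A $$ (j,i))"
  by (auto simp: adj_def)

lemma adj_adj[simp]: "adj (adj A) = A"
  by (auto simp: adj_def)

lemma adj_mult:
  assumes "A \<in> carrier_mat n m" "B \<in> carrier_mat m p"
  shows "adj (A * B) = adj B * adj A"
proof (rule eq_matI)
  fix i j assume "i < dim_row (adj B * adj A)" "j < dim_col (adj B * adj A)"
  then show "adj (A * B) $$ (i, j) = (adj B * adj A) $$ (i, j)"
  proof -
    have ij: "i < p" "j < n" using \<open>i < dim_row (adj B * adj A)\<close> \<open>j < dim_col (adj B * adj A)\<close> assms by auto
    have "adj (A * B) $$ (i, j) = cnj ((A * B) $$ (j,i))" using ij assms by simp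
    also have "\<dots> = cnj (\<Sum>k<m. A $$ (j,k) * B $$ (k,i))" using mult_entry[OF assms(1,2) ij(2,1)] by simp
    also have "\<dots> = (\<Sum>k<m. adj B $$ (i,k) * adj A $$ (k,j))" using ij assms by (simp add: mult.commute)
    also have "\<dots> = (adj B * adj A) $$ (i, j)"
      using mult_entry[OF adj_carrier[OF assms(2)] adj_carrier[OF assms(1)] ij] by simp
    finally show ?thesis .
  qed
qed (use assms in auto)

lemma adj_one[simp]: "adj (1\<^sub>m n) = 1\<^sub>m n"
  by (auto simp: adj_def)

lemma adj_add:
  assumes "A \<in> carrier_mat n m" "B \<in> carrier_mat n m"
  shows "adj (A + B) = adj A + adj B"
  using assms by (auto simp: adj_def)

lemma adj_minus:
  assumes "A \<in> carrier_mat n m" "B \<in> carrier_mat n m"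
  shows "adj (A - B) = adj A - adj B"
  using assms by (auto simp: adj_def)

lemma tr_mult_comm:
  assumes "A \<in> carrier_mat n m" "B \<in> carrier_mat m n"
  shows "tr (A * B) = tr (B * A)"
proof -
  have "tr (A * B) = (\<Sum>i<n. \<Sum>k<m. A $$ (i,k) * B $$ (k,i))"
    using assms mult_entry[OF assms] by (auto simp: tr_def intro!: sum.cong)
  also have "\<dots> = (\<Sum>k<m. \<Sum>i<n. B $$ (k,i) * A $$ (i,k))"
    by (subst sum.swap) (simp add: mult.commute)
  also have "\<dots> = tr (B * A)"
    using assms mult_entry[OF assms(2,1)] by (auto simp: tr_def intro!: sum.cong)
  finally show ?thesis .
qed

lemma tr_add: "A \<in> carrier_mat n n \<Longrightarrow> B \<in> carrier_mat n n \<Longrightarrow> tr (A + B) = tr A + tr B"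
  by (auto simp: tr_def sum.distrib)

lemma tr_minus: "A \<in> carrier_mat n n \<Longrightarrow> B \<in> carrier_mat n n \<Longrightarrow> tr (A - B) = tr A - tr B"
  by (auto simp: tr_def sum_subtractf)

lemma tr_smult: "A \<in> carrier_mat n n \<Longrightarrow> tr (c \<cdot>\<^sub>m A) = c * tr A"
  by (auto simp: tr_def sum_distrib_left)

lemma tr_one: "tr (1\<^sub>m n :: complex mat) = of_nat n"
  by (simp add: tr_def)

lemma mat_eq_vecI:
  fixes A B :: "complex mat"
  assumes "A \<in> carrier_mat n m" "B \<in> carrier_mat n m"
    and "\<And>v. v \<in> carrier_vec m \<Longrightarrow> A *\<^sub>v v = B *\<^sub>v v"
  shows "A = B"
proof (rule eq_matI)
  fix i j assume ij: "i < dim_row B" "j < dim_col B"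
  have "A *\<^sub>v unit_vec m j = B *\<^sub>v unit_vec m j" using assms(3) by simp
  hence "vec_index (A *\<^sub>v unit_vec m j) i = vec_index (B *\<^sub>v unit_vec m j) i" by simp
  moreover have "vec_index (A *\<^sub>v unit_vec m j) i = A $$ (i,j)" if "A \<in> carrier_mat n m" for A :: "complex mat"
  proof -
    have "vec_index (A *\<^sub>v unit_vec m j) i = (\<Sum>k<m. A $$ (i,k) * vec_index (unit_vec m j) k)"
      by (rule mult_vec_entry[OF that]) (use ij assms in auto)
    also have "\<dots> = (\<Sum>k<m. if k = j then A $$ (i,k) else 0)"
      by (rule sum.cong) (auto simp: unit_vec_def)
    also have "\<dots> = A $$ (i,j)" using ij assms by simp
    finally show ?thesis .
  qed
  ultimately show "A $$ (i, j) = B $$ (i, j)" using assms by metis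
qed (use assms in auto)

lemma unitary_right:
  assumes "U \<in> carrier_mat n n" "adj U * U = 1\<^sub>m n"
  shows "U * adj U = 1\<^sub>m n"
  using mat_mult_left_right_inverse[OF adj_carrier[OF assms(1)] assms(1) assms(2)] .


definition nonneg :: "complex \<Rightarrow> bool" where
  "nonneg z \<longleftrightarrow> Im z = 0 \<and> Re z \<ge> 0"

definition bf :: "nat \<Rightarrow> complex mat \<Rightarrow> (nat \<Rightarrow> complex) \<Rightarrow> (nat \<Rightarrow> complex) \<Rightarrow> complex" where
  "bf d M f g = (\<Sum>i<d. \<Sum>j<d. cnj (f i) * M $$ (i,j) * g j)"

lemma nonneg_sum: "(\<And>x. x \<in> A \<Longrightarrow> nonneg (f x)) \<Longrightarrow> nonneg (sum f A)"
  by (auto simp: nonneg_def Im_sum Re_sum intro: sum_nonneg)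

lemma psd_iff_bf: "psd d M \<longleftrightarrow> M \<in> carrier_mat d d \<and> (\<forall>f. nonneg (bf d M f f))"
proof
  assume a: "psd d M"
  hence M: "M \<in> carrier_mat d d" by (simp add: psd_def)
  have "nonneg (bf d M f f)" for f
  proof -
    let ?v = "vec d f"
    have "?v \<in> carrier_vec d" by simp
    with a have "Im (\<Sum>i<d. cnj (vec_index ?v i) * vec_index (M *\<^sub>v ?v) i) = 0 \<and> Re (\<Sum>i<d. cnj (vec_index ?v i) * vec_index (M *\<^sub>v ?v) i) \<ge> 0"
      unfolding psd_def Let_def by blast
    moreover have "(\<Sum>i<d. cnj (vec_index ?v i) * vec_index (M *\<^sub>v ?v) i) = bf d M f f"
      unfolding bf_def
    proof (rule sum.cong[OF refl])
      fix i assume i: "i \<in> {..<d}"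
      have "vec_index (M *\<^sub>v ?v) i = (\<Sum>k<d. M $$ (i,k) * vec_index ?v k)"
        by (rule mult_vec_entry[OF M]) (use i in auto)
      also have "\<dots> = (\<Sum>k<d. M $$ (i,k) * f k)" by (rule sum.cong) auto
      finally show "cnj (vec_index ?v i) * vec_index (M *\<^sub>v ?v) i = (\<Sum>j<d. cnj (f i) * M $$ (i, j) * f j)"
        using i by (simp add: sum_distrib_left mult.assoc)
    qed
    ultimately show ?thesis unfolding nonneg_def by metis
  qed
  with M show "M \<in> carrier_mat d d \<and> (\<forall>f. nonneg (bf d M f f))" by blast
next
  assume a: "M \<in> carrier_mat d d \<and> (\<forall>f. nonneg (bf d M f f))"
  hence M: "M \<in> carrier_mat d d" by blast
  show "psd d M" unfolding psd_def Let_def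
  proof (rule conjI[OF M], rule ballI)
    fix v :: "complex vec" assume v: "v \<in> carrier_vec d"
    have "(\<Sum>i<d. cnj (vec_index v i) * vec_index (M *\<^sub>v v) i) = bf d M (\<lambda>i. vec_index v i) (\<lambda>i. vec_index v i)"
      unfolding bf_def
    proof (rule sum.cong[OF refl])
      fix i assume i: "i \<in> {..<d}"
      have "vec_index (M *\<^sub>v v) i = (\<Sum>k<d. M $$ (i,k) * vec_index v k)"
        by (rule mult_vec_entry[OF M v]) (use i in auto)
      then show "cnj (vec_index v i) * vec_index (M *\<^sub>v v) i = (\<Sum>j<d. cnj (vec_index v i) * M $$ (i, j) * vec_index v j)"
        by (simp add: sum_distrib_left mult.assoc)
    qed
    with a show "Im (\<Sum>i<d. cnj (vec_index v i) * vec_index (M *\<^sub>v v) i) = 0 \<and> 0 \<le> Re (\<Sum>i<d. cnj (vec_index v i) * vec_index (M *\<^sub>v v) i)"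
      by (simp add: nonneg_def)
  qed
qed

lemma bf_conj:
  assumes A: "A \<in> carrier_mat d d" and W: "W \<in> carrier_mat d' d"
  shows "bf d' (W * A * adj W) f g =
         bf d A (\<lambda>k. \<Sum>i<d'. cnj (W $$ (i,k)) * f i) (\<lambda>k. \<Sum>i<d'. cnj (W $$ (i,k)) * g i)"
proof -
  have WA: "W * A \<in> carrier_mat d' d" using A W by simp
  have e: "(W * A * adj W) $$ (i,j) = (\<Sum>l<d. (\<Sum>k<d. W $$ (i,k) * A $$ (k,l)) * cnj (W $$ (j,l)))"
    if "i < d'" "j < d'" for i j
  proof -
    have "(W * A * adj W) $$ (i,j) = (\<Sum>l<d. (W * A) $$ (i,l) * adj W $$ (l,j))"
      by (rule mult_entry[OF WA adj_carrier[OF W] that])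
    also have "\<dots> = (\<Sum>l<d. (\<Sum>k<d. W $$ (i,k) * A $$ (k,l)) * cnj (W $$ (j,l)))"
      by (rule sum.cong[OF refl]) (use that W A mult_entry[OF W A] in auto)
    finally show ?thesis .
  qed
  let ?T = "\<lambda>i j k l. cnj (f i) * W $$ (i,k) * A $$ (k,l) * cnj (W $$ (j,l)) * g j"
  have "bf d' (W * A * adj W) f g = (\<Sum>i<d'. \<Sum>j<d'. \<Sum>l<d. \<Sum>k<d. ?T i j k l)"
    unfolding bf_def by (auto simp: e sum_distrib_left sum_distrib_right mult.assoc intro!: sum.cong)
  also have "\<dots> = (\<Sum>i<d'. \<Sum>l<d. \<Sum>k<d. \<Sum>j<d'. ?T i j k l)"
    by (rule sum.cong[OF refl], subst sum.swap, rule sum.cong[OF refl], subst sum.swap, simp)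
  also have "\<dots> = (\<Sum>l<d. \<Sum>k<d. \<Sum>i<d'. \<Sum>j<d'. ?T i j k l)"
    by (subst sum.swap, rule sum.cong[OF refl], subst sum.swap, simp)
  also have "\<dots> = (\<Sum>k<d. \<Sum>l<d. \<Sum>i<d'. \<Sum>j<d'. ?T i j k l)"
    by (rule sum.swap)
  also have "\<dots> = bf d A (\<lambda>k. \<Sum>i<d'. cnj (W $$ (i,k)) * f i) (\<lambda>k. \<Sum>i<d'. cnj (W $$ (i,k)) * g i)"
    unfolding bf_def by (auto simp: sum_distrib_left sum_distrib_right mult_ac intro!: sum.cong)
  finally show ?thesis .
qed

lemma psd_conj:
  assumes "psd d A" "W \<in> carrier_mat d' d"
  shows "psd d' (W * A * adj W)"
  using assms bf_conj[of A d W d'] unfolding psd_iff_bf by auto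

lemma bf_add_left: "bf d M (\<lambda>i. f i + h i) g = bf d M f g + bf d M h g"
  by (simp add: bf_def algebra_simps sum.distrib)
lemma bf_add_right: "bf d M f (\<lambda>i. g i + h i) = bf d M f g + bf d M f h"
  by (simp add: bf_def algebra_simps sum.distrib)
lemma bf_smult_left: "bf d M (\<lambda>i. c * f i) g = cnj c * bf d M f g"
  by (simp add: bf_def algebra_simps sum_distrib_left)
lemma bf_smult_right: "bf d M f (\<lambda>i. c * g i) = c * bf d M f g"
  by (simp add: bf_def algebra_simps sum_distrib_left)

lemma real_quad_nonneg_lin:
  fixes a b :: real
  assumes "\<And>t. t * a + t^2 * b \<ge> 0" "b \<ge> 0"
  shows "a = 0"
proof (rule ccontr)
  assume na: "a \<noteq> 0"
  define t where "t = - a / (b + 1)"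
  have bp: "b + 1 > 0" using assms(2) by simp
  have "t * a + t^2 * b = -(a^2) / (b+1)^2"
    using bp unfolding t_def by (simp add: power2_eq_square divide_simps) (simp add: algebra_simps)
  also have "\<dots> < 0"
  proof -
    have "a^2 / (b+1)^2 > 0" using na bp by (simp add: zero_less_divide_iff)
    then show ?thesis by simp
  qed
  finally show False using assms(1)[of t] by simp
qed

lemma psd_zero_bf:
  assumes "psd d M" "bf d M f f = 0"
  shows "bf d M g f = 0" "bf d M f g = 0"
proof -
  have nn: "nonneg (bf d M h h)" for h using assms(1) unfolding psd_iff_bf by blast
  have ex: "bf d M (\<lambda>i. f i + c * g i) (\<lambda>i. f i + c * g i)
        = cnj c * bf d M g f + c * bf d M f g + (cnj c * c) * bf d M g g" for c
    using assms(2) by (simp add: bf_add_left bf_add_right bf_smult_left bf_smult_right algebra_simps)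
  have key: "cnj c * bf d M g f + c * bf d M f g = 0" if c: "cnj c * c = 1" for c
  proof -
    let ?a = "cnj c * bf d M g f + c * bf d M f g"
    have b: "nonneg (bf d M g g)" by (rule nn)
    have h: "nonneg (of_real t * ?a + of_real (t^2) * bf d M g g)" for t
    proof -
      have "bf d M (\<lambda>i. f i + (of_real t * c) * g i) (\<lambda>i. f i + (of_real t * c) * g i)
            = of_real t * ?a + of_real (t^2) * bf d M g g"
        unfolding ex using c by (simp add: algebra_simps power2_eq_square)
      then show ?thesis using nn by metis
    qed
    have im: "Im ?a = 0" using h[of 1] b by (simp add: nonneg_def)
    have "\<And>t. t * Re ?a + t^2 * Re (bf d M g g) \<ge> 0"
      using h b by (simp add: nonneg_def)
    hence "Re ?a = 0" using b by (intro real_quad_nonneg_lin) (auto simp: nonneg_def)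
    with im show ?thesis by (simp add: complex_eq_iff)
  qed
  have k1: "bf d M g f + bf d M f g = 0" using key[of 1] by simp
  have k2: "- \<i> * bf d M g f + \<i> * bf d M f g = 0" using key[of "\<i>"] by simp
  from k1 k2 show "bf d M g f = 0" "bf d M f g = 0"
    by (simp_all add: algebra_simps)
qed


lemma sum_mod_reindex:
  fixes F :: "nat \<Rightarrow> 'a::comm_monoid_add"
  assumes a: "a < n"
  shows "(\<Sum>p<d*n. if p mod n = a then F p else 0) = (\<Sum>p'<d. F (p' * n + a))"
proof -
  have S: "{p. p < d*n \<and> p mod n = a} = (\<lambda>p'. p' * n + a) ` {..<d}"
  proof (intro equalityI subsetI)
    fix p assume p: "p \<in> {p. p < d*n \<and> p mod n = a}"
    hence "p = (p div n) * n + a" using div_mult_mod_eq[of p n] by simp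
    moreover have "p div n < d" using p by (simp add: less_mult_imp_div_less)
    ultimately show "p \<in> (\<lambda>p'. p' * n + a) ` {..<d}" by blast
  next
    fix p assume "p \<in> (\<lambda>p'. p' * n + a) ` {..<d}"
    then obtain p' where p': "p' < d" "p = p' * n + a" by blast
    have "p' * n + a < (p'+1) * n" using a by simp
    also have "\<dots> \<le> d * n" using p' by (intro mult_right_mono) auto
    finally show "p \<in> {p. p < d*n \<and> p mod n = a}" using p' a by simp
  qed
  have "(\<Sum>p<d*n. if p mod n = a then F p else 0) = (\<Sum>p\<in>{p. p < d*n \<and> p mod n = a}. F p)"
    by (simp add: sum.If_cases Int_def lessThan_def conj_commute)
  also have "\<dots> = (\<Sum>p\<in>(\<lambda>p'. p' * n + a) ` {..<d}. F p)" using S by simp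
  also have "\<dots> = (\<Sum>p'<d. F (p' * n + a))"
    by (rule sum.reindex_cong[where l = "\<lambda>p'. p' * n + a"]) (use a in \<open>auto simp: inj_on_def\<close>)
  finally show ?thesis .
qed

definition Wn :: "nat \<Rightarrow> nat \<Rightarrow> nat \<Rightarrow> complex mat \<Rightarrow> complex mat" where
  "Wn n dY dZ K = mat (dY*n) (dZ*n) (\<lambda>(i,j). if i mod n = j mod n then K $$ (i div n, j div n) else 0)"

lemma Wn_carrier: "Wn n dY dZ K \<in> carrier_mat (dY*n) (dZ*n)"
  by (simp add: Wn_def)

lemma ampl_carrier: "ampl dX dY n \<Phi> M \<in> carrier_mat (dY*n) (dY*n)"
  by (simp add: ampl_def)

lemma ampl_entry: "i < dY*n \<Longrightarrow> j < dY*n \<Longrightarrow> ampl dX dY n \<Phi> M $$ (i,j) =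
   \<Phi> (mat dX dX (\<lambda>(k,l). M $$ (k * n + i mod n, l * n + j mod n))) $$ (i div n, j div n)"
  by (simp add: ampl_def)

lemma ampl_conj:
  assumes K: "K \<in> carrier_mat dY dZ"
    and Phi: "\<And>X. X \<in> carrier_mat dX dX \<Longrightarrow> \<Phi> X \<in> carrier_mat dZ dZ"
  shows "ampl dX dY n (\<lambda>X. K * \<Phi> X * adj K) M =
         Wn n dY dZ K * ampl dX dZ n \<Phi> M * adj (Wn n dY dZ K)"
proof (rule eq_matI)
  fix i j assume "i < dim_row (Wn n dY dZ K * ampl dX dZ n \<Phi> M * adj (Wn n dY dZ K))"
    "j < dim_col (Wn n dY dZ K * ampl dX dZ n \<Phi> M * adj (Wn n dY dZ K))"
  hence ij: "i < dY*n" "j < dY*n" by (auto simp: Wn_def)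
  hence n: "n > 0" by (cases n) auto
  have id: "i div n < dY" "j div n < dY" using ij by (auto simp: less_mult_imp_div_less)
  have am: "i mod n < n" "j mod n < n" using n by auto
  define X where "X = mat dX dX (\<lambda>(k,l). M $$ (k * n + i mod n, l * n + j mod n))"
  have X: "X \<in> carrier_mat dX dX" by (simp add: X_def)
  let ?W = "Wn n dY dZ K" and ?A = "ampl dX dZ n \<Phi> M"
  have WA: "?W * ?A \<in> carrier_mat (dY*n) (dZ*n)" using Wn_carrier ampl_carrier by (rule mult_carrier_mat)
  have WAe: "(?W * ?A) $$ (i, q) = (\<Sum>p'<dZ. K $$ (i div n, p') * ?A $$ (p' * n + i mod n, q))"
    if q: "q < dZ*n" for q
  proof -
    have "(?W * ?A) $$ (i, q) = (\<Sum>p<dZ*n. ?W $$ (i,p) * ?A $$ (p,q))"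
      by (rule mult_entry[OF Wn_carrier ampl_carrier ij(1) q])
    also have "\<dots> = (\<Sum>p<dZ*n. if p mod n = i mod n then K $$ (i div n, p div n) * ?A $$ (p,q) else 0)"
      by (rule sum.cong) (use ij in \<open>auto simp: Wn_def\<close>)
    also have "\<dots> = (\<Sum>p'<dZ. K $$ (i div n, p') * ?A $$ (p' * n + i mod n, q))"
      by (subst sum_mod_reindex[OF am(1)]) (use am in simp)
    finally show ?thesis .
  qed
  have Ae: "?A $$ (p' * n + i mod n, q' * n + j mod n) = \<Phi> X $$ (p', q')"
    if "p' < dZ" "q' < dZ" for p' q'
  proof -
    have b: "x * n + y < dZ * n" if "x < dZ" "y < n" for x y
    proof -
      have "x * n + y < (x+1) * n" using that by simp
      also have "\<dots> \<le> dZ * n" using that by (intro mult_right_mono) auto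
      finally show ?thesis .
    qed
    have "p' * n + i mod n < dZ * n" "q' * n + j mod n < dZ * n"
      using b that am by auto
    then show ?thesis using am by (simp add: ampl_entry X_def)
  qed
  have "(?W * ?A * adj ?W) $$ (i,j) = (\<Sum>q<dZ*n. (?W * ?A) $$ (i,q) * adj ?W $$ (q,j))"
    by (rule mult_entry[OF WA adj_carrier[OF Wn_carrier] ij])
  also have "\<dots> = (\<Sum>q<dZ*n. if q mod n = j mod n then (?W * ?A) $$ (i,q) * cnj (K $$ (j div n, q div n)) else 0)"
    by (rule sum.cong) (use ij in \<open>auto simp: Wn_def\<close>)
  also have "\<dots> = (\<Sum>q'<dZ. (?W * ?A) $$ (i, q' * n + j mod n) * cnj (K $$ (j div n, q')))"
    by (subst sum_mod_reindex[OF am(2)]) (use am in simp)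
  also have "\<dots> = (\<Sum>q'<dZ. (\<Sum>p'<dZ. K $$ (i div n, p') * \<Phi> X $$ (p', q')) * cnj (K $$ (j div n, q')))"
  proof (rule sum.cong[OF refl])
    fix q' assume q': "q' \<in> {..<dZ}"
    have qb: "q' * n + j mod n < dZ * n"
    proof -
      have "q' * n + j mod n < (q'+1) * n" using am by simp
      also have "\<dots> \<le> dZ * n" using q' by (intro mult_right_mono) auto
      finally show ?thesis .
    qed
    show "(?W * ?A) $$ (i, q' * n + j mod n) * cnj (K $$ (j div n, q')) =
          (\<Sum>p'<dZ. K $$ (i div n, p') * \<Phi> X $$ (p', q')) * cnj (K $$ (j div n, q'))"
      using q' by (simp add: WAe[OF qb] Ae)
  qed
  also have "\<dots> = (K * \<Phi> X * adj K) $$ (i div n, j div n)"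
  proof -
    have KP: "K * \<Phi> X \<in> carrier_mat dY dZ" using K Phi[OF X] by simp
    have "(K * \<Phi> X * adj K) $$ (i div n, j div n) = (\<Sum>q'<dZ. (K * \<Phi> X) $$ (i div n, q') * adj K $$ (q', j div n))"
      by (rule mult_entry[OF KP adj_carrier[OF K] id])
    also have "\<dots> = (\<Sum>q'<dZ. (\<Sum>p'<dZ. K $$ (i div n, p') * \<Phi> X $$ (p', q')) * cnj (K $$ (j div n, q')))"
      by (rule sum.cong[OF refl]) (use K id Phi[OF X] mult_entry[OF K Phi[OF X]] in auto)
    finally show ?thesis by simp
  qed
  also have "\<dots> = ampl dX dY n (\<lambda>X. K * \<Phi> X * adj K) M $$ (i,j)"
    using ij by (simp add: ampl_entry X_def)
  finally show "ampl dX dY n (\<lambda>X. K * \<Phi> X * adj K) M $$ (i, j) = (?W * ?A * adj ?W) $$ (i, j)" by simp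
qed (auto simp: ampl_def Wn_def)

definition CP :: "nat \<Rightarrow> nat \<Rightarrow> (complex mat \<Rightarrow> complex mat) \<Rightarrow> bool" where
  "CP dX dY \<Phi> \<longleftrightarrow> (\<forall>X \<in> carrier_mat dX dX. \<Phi> X \<in> carrier_mat dY dY) \<and>
     (\<forall>n M. psd (dX * n) M \<longrightarrow> psd (dY * n) (ampl dX dY n \<Phi> M))"

lemma CP_kraus:
  assumes cp: "CP dX dZ \<Phi>0" and R: "finite R"
    and Kf: "\<And>r. r \<in> R \<Longrightarrow> Kf r \<in> carrier_mat dY dZ"
    and car: "\<And>X. X \<in> carrier_mat dX dX \<Longrightarrow> \<Phi> X \<in> carrier_mat dY dY"
    and ent: "\<And>X i j. X \<in> carrier_mat dX dX \<Longrightarrow> i < dY \<Longrightarrow> j < dY \<Longrightarrow>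
        \<Phi> X $$ (i,j) = (\<Sum>r\<in>R. (Kf r * \<Phi>0 X * adj (Kf r)) $$ (i,j))"
  shows "CP dX dY \<Phi>"
  unfolding CP_def
proof (intro conjI ballI allI impI)
  fix X :: "complex mat" assume "X \<in> carrier_mat dX dX" then show "\<Phi> X \<in> carrier_mat dY dY" by (rule car)
next
  fix n M assume M: "psd (dX * n) M"
  have car0: "\<And>X. X \<in> carrier_mat dX dX \<Longrightarrow> \<Phi>0 X \<in> carrier_mat dZ dZ" using cp by (simp add: CP_def)
  have A: "psd (dZ * n) (ampl dX dZ n \<Phi>0 M)" using cp M by (simp add: CP_def)
  have e: "ampl dX dY n \<Phi> M $$ (i,j) = (\<Sum>r\<in>R. ampl dX dY n (\<lambda>X. Kf r * \<Phi>0 X * adj (Kf r)) M $$ (i,j))"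
    if "i < dY*n" "j < dY*n" for i j
  proof -
    have n: "n > 0" using that by (cases n) auto
    have "i div n < dY" "j div n < dY" using that by (auto simp: less_mult_imp_div_less)
    then show ?thesis using that by (simp add: ampl_entry ent)
  qed
  have "nonneg (bf (dY*n) (ampl dX dY n \<Phi> M) f f)" for f
  proof -
    have "bf (dY*n) (ampl dX dY n \<Phi> M) f f = (\<Sum>r\<in>R. bf (dY*n) (ampl dX dY n (\<lambda>X. Kf r * \<Phi>0 X * adj (Kf r)) M) f f)"
      unfolding bf_def
      by (simp add: e sum_distrib_left sum_distrib_right) (subst sum.swap, rule sum.cong[OF refl], subst sum.swap, simp)
    also have "nonneg \<dots>"
    proof (rule nonneg_sum)
      fix r assume r: "r \<in> R"
      have "psd (dY*n) (Wn n dY dZ (Kf r) * ampl dX dZ n \<Phi>0 M * adj (Wn n dY dZ (Kf r)))"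
        by (rule psd_conj[OF A Wn_carrier])
      moreover have "ampl dX dY n (\<lambda>X. Kf r * \<Phi>0 X * adj (Kf r)) M = Wn n dY dZ (Kf r) * ampl dX dZ n \<Phi>0 M * adj (Wn n dY dZ (Kf r))"
        by (rule ampl_conj[OF Kf[OF r] car0])
      ultimately show "nonneg (bf (dY*n) (ampl dX dY n (\<lambda>X. Kf r * \<Phi>0 X * adj (Kf r)) M) f f)"
        unfolding psd_iff_bf by simp
    qed
    finally show ?thesis .
  qed
  then show "psd (dY * n) (ampl dX dY n \<Phi> M)" unfolding psd_iff_bf using ampl_carrier by blast
qed


locale haar_setting =
  fixes \<mu> :: "'g::{group_add, t2_space} measure"
  assumes cpt: "compact (UNIV :: 'g set)"
    and mult_cont: "continuous_on UNIV (\<lambda>p :: 'g \<times> 'g. fst p + snd p)"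
    and haar: "haar_prob \<mu>"
begin

lemma prob: "prob_space \<mu>" using haar by (simp add: haar_prob_def)
lemma sets_mu: "sets \<mu> = sets borel" using haar by (simp add: haar_prob_def)
lemma space_mu: "space \<mu> = UNIV" using sets_eq_imp_space_eq[OF sets_mu] by simp
lemma distr_mu: "distr \<mu> \<mu> (\<lambda>g. h + g) = \<mu>" using haar by (simp add: haar_prob_def)

lemma meas_cont: "continuous_on UNIV f \<Longrightarrow> f \<in> borel_measurable \<mu>"
proof -
  assume "continuous_on UNIV f"
  hence "f \<in> borel_measurable borel" by (rule borel_measurable_continuous_onI)
  moreover have "measurable \<mu> borel = measurable borel borel" by (rule measurable_cong_sets[OF sets_mu refl])
  ultimately show ?thesis by metis
qed

lemma int_cont:
  fixes f :: "'g \<Rightarrow> 'b::{banach, second_countable_topology}"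
  assumes "continuous_on UNIV f"
  shows "integrable \<mu> f"
proof -
  have "compact (f ` UNIV)" by (rule compact_continuous_image[OF assms cpt])
  then obtain B where B: "\<forall>x\<in>f ` UNIV. norm x \<le> B" using compact_imp_bounded bounded_iff by metis
  interpret prob_space \<mu> by (rule prob)
  show ?thesis
    by (rule integrable_const_bound[where B = B]) (use B meas_cont[OF assms] in auto)
qed

lemma transl_cont: "continuous_on UNIV (\<lambda>g::'g. h + g)"
proof -
  have "continuous_on UNIV ((\<lambda>p :: 'g \<times> 'g. fst p + snd p) \<circ> (\<lambda>g. (h, g)))"
  proof (rule continuous_on_compose)
    show "continuous_on UNIV (\<lambda>g::'g. (h, g))" by (intro continuous_on_Pair continuous_on_const continuous_on_id)
    show "continuous_on ((\<lambda>g. (h, g)) ` UNIV) (\<lambda>p :: 'g \<times> 'g. fst p + snd p)"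
      by (rule continuous_on_subset[OF mult_cont]) simp
  qed
  then show ?thesis by (simp add: o_def)
qed

lemma transl_meas: "(\<lambda>g::'g. h + g) \<in> measurable \<mu> \<mu>"
proof -
  have "(\<lambda>g::'g. h + g) \<in> borel_measurable borel" by (rule borel_measurable_continuous_onI[OF transl_cont])
  moreover have "measurable \<mu> \<mu> = measurable borel borel" by (rule measurable_cong_sets[OF sets_mu sets_mu])
  ultimately show ?thesis by metis
qed

lemma integral_transl:
  fixes f :: "'g \<Rightarrow> 'b::{banach, second_countable_topology}"
  assumes "continuous_on UNIV f"
  shows "integral\<^sup>L \<mu> (\<lambda>g. f (h + g)) = integral\<^sup>L \<mu> f"
proof -
  have "integral\<^sup>L (distr \<mu> \<mu> (\<lambda>g. h + g)) f = integral\<^sup>L \<mu> (\<lambda>g. f (h + g))"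
    by (rule integral_distr[OF transl_meas meas_cont[OF assms]])
  then show ?thesis using distr_mu by simp
qed

lemma full_support:
  fixes f :: "'g \<Rightarrow> real"
  assumes cont: "continuous_on UNIV f" and nn: "\<And>x. f x \<ge> 0" and int0: "integral\<^sup>L \<mu> f = 0"
  shows "f x0 = 0"
proof (rule ccontr)
  assume ne: "f x0 \<noteq> 0"
  interpret prob_space \<mu> by (rule prob)
  define W where "W = f -` (- {0})"
  have "open (f -` (- {0}) \<inter> UNIV)"
    by (rule continuous_on_open_vimage[OF open_UNIV, THEN iffD1, OF cont, rule_format]) auto
  hence oW: "open W" unfolding W_def by simp
  have Wm: "W \<in> sets \<mu>" using oW sets_mu by simp
  have ae: "AE x in \<mu>. f x = 0"
    using integral_nonneg_eq_0_iff_AE[OF int_cont[OF cont]] nn int0 by simp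
  have eq: "{x\<in>space \<mu>. \<not> f x = 0} = W" by (auto simp: space_mu W_def)
  have W0: "emeasure \<mu> W = 0"
    using AE_iff_measurable[OF Wm eq] ae by simp
  define T where "T h = (\<lambda>g. h + g) -` W" for h
  have oT: "open (T h)" for h
  proof -
    have "open ((\<lambda>g. h + g) -` W \<inter> UNIV)"
      by (rule continuous_on_open_vimage[OF open_UNIV, THEN iffD1, OF transl_cont, rule_format, OF oW])
    then show ?thesis unfolding T_def by simp
  qed
  have T0: "emeasure \<mu> (T h) = 0" for h
  proof -
    have "emeasure (distr \<mu> \<mu> (\<lambda>g. h + g)) W = emeasure \<mu> ((\<lambda>g. h + g) -` W \<inter> space \<mu>)"
      by (rule emeasure_distr[OF transl_meas Wm])
    then show ?thesis using distr_mu W0 by (simp add: T_def space_mu)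
  qed
  have cov: "UNIV \<subseteq> \<Union> (range T)"
  proof
    fix g :: 'g
    have "(x0 - g) + g = x0" by simp
    hence "g \<in> T (x0 - g)" using ne by (simp add: T_def W_def)
    then show "g \<in> \<Union> (range T)" by blast
  qed
  obtain TT where TT: "TT \<subseteq> range T" "finite TT" "UNIV \<subseteq> \<Union> TT"
    using compactE[OF cpt cov] oT by blast
  have "emeasure \<mu> (\<Union>B\<in>TT. B) \<le> (\<Sum>B\<in>TT. emeasure \<mu> B)"
    by (rule emeasure_subadditive_finite[OF TT(2)]) (use TT(1) oT sets_mu in auto)
  also have "\<dots> = 0" using TT(1) T0 by (intro sum.neutral) auto
  finally have "emeasure \<mu> UNIV = 0" using TT(3) by (simp add: top_unique)
  then show False using emeasure_space_1 space_mu by simp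
qed

end


lemma conj_entry:
  assumes A: "A \<in> carrier_mat d d" and W: "W \<in> carrier_mat d' d" and ij: "i < d'" "j < d'"
  shows "(W * A * adj W) $$ (i,j) = (\<Sum>l<d. (\<Sum>k<d. W $$ (i,k) * A $$ (k,l)) * cnj (W $$ (j,l)))"
proof -
  have WA: "W * A \<in> carrier_mat d' d" using A W by simp
  have "(W * A * adj W) $$ (i,j) = (\<Sum>l<d. (W * A) $$ (i,l) * adj W $$ (l,j))"
    by (rule mult_entry[OF WA adj_carrier[OF W] ij])
  also have "\<dots> = (\<Sum>l<d. (\<Sum>k<d. W $$ (i,k) * A $$ (k,l)) * cnj (W $$ (j,l)))"
    by (rule sum.cong[OF refl]) (use ij W A mult_entry[OF W A] in auto)
  finally show ?thesis .
qed

lemma (in haar_setting) integral_sum2: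
  fixes f :: "'i \<Rightarrow> 'j \<Rightarrow> 'g \<Rightarrow> complex"
  assumes "\<And>i j. i \<in> I \<Longrightarrow> j \<in> J \<Longrightarrow> integrable \<mu> (f i j)"
  shows "integral\<^sup>L \<mu> (\<lambda>x. \<Sum>i\<in>I. \<Sum>j\<in>J. f i j x) = (\<Sum>i\<in>I. \<Sum>j\<in>J. integral\<^sup>L \<mu> (f i j))"
proof -
  have "integral\<^sup>L \<mu> (\<lambda>x. \<Sum>i\<in>I. \<Sum>j\<in>J. f i j x) = (\<Sum>i\<in>I. integral\<^sup>L \<mu> (\<lambda>x. \<Sum>j\<in>J. f i j x))"
    by (rule Bochner_Integration.integral_sum[where f = "\<lambda>i x. \<Sum>j\<in>J. f i j x"]) (use assms in \<open>auto intro!: integrable_sum\<close>)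
  also have "\<dots> = (\<Sum>i\<in>I. \<Sum>j\<in>J. integral\<^sup>L \<mu> (f i j))"
    by (rule sum.cong[OF refl], rule Bochner_Integration.integral_sum) (use assms in auto)
  finally show ?thesis .
qed

locale rep_setting = haar_setting \<mu> for \<mu> :: "'g::{group_add, t2_space} measure" +
  fixes UB :: "'g \<Rightarrow> complex mat" and dB :: nat
  assumes repB: "unitary_rep dB UB"
begin

lemma UB_car[simp]: "UB g \<in> carrier_mat dB dB" using repB by (simp add: unitary_rep_def)
lemma UB_dims[simp]: "dim_row (UB g) = dB" "dim_col (UB g) = dB" using carrier_matD[OF UB_car[of g]] by auto
lemma adjUB_car[simp]: "adj (UB g) \<in> carrier_mat dB dB" by simp
lemma UB_unit: "adj (UB g) * UB g = 1\<^sub>m dB" using repB by (simp add: unitary_rep_def)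
lemma UB_unit': "UB g * adj (UB g) = 1\<^sub>m dB" by (rule unitary_right[OF UB_car UB_unit])
lemma UB_add: "UB (g + h) = UB g * UB h" using repB by (simp add: unitary_rep_def)
lemma UB_cont: "i < dB \<Longrightarrow> j < dB \<Longrightarrow> continuous_on UNIV (\<lambda>g. UB g $$ (i,j))"
  using repB by (simp add: unitary_rep_def)

lemma UB0: "UB 0 = 1\<^sub>m dB"
proof -
  have e: "UB 0 = UB 0 * UB 0" using UB_add[of 0 0] by simp
  have "UB 0 = 1\<^sub>m dB * UB 0" using left_mult_one_mat[OF UB_car[of 0]] by simp
  also have "\<dots> = (adj (UB 0) * UB 0) * UB 0" by (simp only: UB_unit)
  also have "\<dots> = adj (UB 0) * (UB 0 * UB 0)" by (rule assoc_mult_mat[OF adjUB_car UB_car UB_car])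
  also have "\<dots> = adj (UB 0) * UB 0" by (simp only: e[symmetric])
  also have "\<dots> = 1\<^sub>m dB" by (rule UB_unit)
  finally show ?thesis .
qed

lemma UB_minus: "UB (- g) = adj (UB g)"
proof -
  have "UB (- g) * UB g = 1\<^sub>m dB" using UB_add[of "-g" g] UB0 by simp
  hence "UB (- g) * UB g * adj (UB g) = adj (UB g)" using left_mult_one_mat[OF adjUB_car[of g]] by simp
  moreover have "UB (- g) * UB g * adj (UB g) = UB (- g)"
    using assoc_mult_mat[OF UB_car UB_car adjUB_car, of "-g" g g] UB_unit'[of g] right_mult_one_mat[OF UB_car[of "-g"]] by simp
  ultimately show ?thesis by simp
qed

definition F :: "complex mat \<Rightarrow> 'g \<Rightarrow> complex mat" where
  "F \<sigma> g = UB g * \<sigma> * adj (UB g)"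

lemma F_car: "\<sigma> \<in> carrier_mat dB dB \<Longrightarrow> F \<sigma> g \<in> carrier_mat dB dB"
  unfolding F_def by (rule mult_carrier_mat[OF mult_carrier_mat[OF UB_car] adjUB_car])

lemma F0: "\<sigma> \<in> carrier_mat dB dB \<Longrightarrow> F \<sigma> 0 = \<sigma>"
  by (simp add: F_def UB0)

lemma F_cont:
  assumes s: "\<sigma> \<in> carrier_mat dB dB" and ij: "i < dB" "j < dB"
  shows "continuous_on UNIV (\<lambda>g. F \<sigma> g $$ (i,j))"
proof -
  have "continuous_on UNIV (\<lambda>g. (\<Sum>l<dB. (\<Sum>k<dB. UB g $$ (i,k) * \<sigma> $$ (k,l)) * cnj (UB g $$ (j,l))))"
    by (intro continuous_on_sum continuous_on_mult continuous_on_const continuous_on_cnj UB_cont ij) auto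
  moreover have "F \<sigma> g $$ (i,j) = (\<Sum>l<dB. (\<Sum>k<dB. UB g $$ (i,k) * \<sigma> $$ (k,l)) * cnj (UB g $$ (j,l)))" for g
    unfolding F_def by (rule conj_entry[OF s UB_car ij])
  ultimately show ?thesis by simp
qed

lemma F_int: "\<sigma> \<in> carrier_mat dB dB \<Longrightarrow> i < dB \<Longrightarrow> j < dB \<Longrightarrow> integrable \<mu> (\<lambda>g. F \<sigma> g $$ (i,j))"
  by (rule int_cont[OF F_cont])

lemma twirl_car: "\<sigma> \<in> carrier_mat dB dB \<Longrightarrow> twirl \<mu> UB \<sigma> \<in> carrier_mat dB dB"
  by (simp add: twirl_def)

lemma twirl_entry: "\<sigma> \<in> carrier_mat dB dB \<Longrightarrow> i < dB \<Longrightarrow> j < dB \<Longrightarrow>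
    twirl \<mu> UB \<sigma> $$ (i,j) = integral\<^sup>L \<mu> (\<lambda>g. F \<sigma> g $$ (i,j))"
  by (simp add: twirl_def F_def)

lemma F_add: "\<sigma> \<in> carrier_mat dB dB \<Longrightarrow> UB h * F \<sigma> g * adj (UB h) = F \<sigma> (h + g)"
proof -
  assume s: "\<sigma> \<in> carrier_mat dB dB"
  have "F \<sigma> (h + g) = UB h * UB g * \<sigma> * (adj (UB g) * adj (UB h))"
    unfolding F_def UB_add adj_mult[OF UB_car UB_car] ..
  also have "\<dots> = UB h * (UB g * \<sigma> * adj (UB g)) * adj (UB h)"
  proof -
    have c: "UB h * UB g * \<sigma> \<in> carrier_mat dB dB" "UB g * \<sigma> \<in> carrier_mat dB dB"
      using mult_carrier_mat[OF mult_carrier_mat[OF UB_car UB_car] s] mult_carrier_mat[OF UB_car s] by auto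
    have c3: "UB h * (UB g * \<sigma>) \<in> carrier_mat dB dB" using mult_carrier_mat[OF UB_car c(2)] by simp
    have e1: "UB h * UB g * \<sigma> = UB h * (UB g * \<sigma>)"
      using assoc_mult_mat[OF UB_car UB_car s] by simp
    have e2: "UB h * (UB g * \<sigma>) * (adj (UB g) * adj (UB h)) = UB h * (UB g * \<sigma>) * adj (UB g) * adj (UB h)"
      using assoc_mult_mat[OF c3 adjUB_car adjUB_car] by simp
    have e3: "UB h * (UB g * \<sigma>) * adj (UB g) = UB h * (UB g * \<sigma> * adj (UB g))"
      using assoc_mult_mat[OF UB_car c(2) adjUB_car] by simp
    show ?thesis by (simp only: e1 e2 e3)
  qed
  finally show ?thesis by (simp add: F_def)
qed

lemma twirl_inv:
  assumes s: "\<sigma> \<in> carrier_mat dB dB"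
  shows "UB h * twirl \<mu> UB \<sigma> * adj (UB h) = twirl \<mu> UB \<sigma>"
proof (rule eq_matI)
  fix i j assume "i < dim_row (twirl \<mu> UB \<sigma>)" "j < dim_col (twirl \<mu> UB \<sigma>)"
  hence ij: "i < dB" "j < dB" using twirl_car[OF s] by auto
  let ?G = "twirl \<mu> UB \<sigma>"
  have int: "\<And>k l. k < dB \<Longrightarrow> l < dB \<Longrightarrow> integrable \<mu> (\<lambda>g. F \<sigma> g $$ (k,l))" using F_int[OF s] by blast
  have "(UB h * ?G * adj (UB h)) $$ (i,j) = (\<Sum>l<dB. (\<Sum>k<dB. UB h $$ (i,k) * ?G $$ (k,l)) * cnj (UB h $$ (j,l)))"
    by (rule conj_entry[OF twirl_car[OF s] UB_car ij])
  also have "\<dots> = (\<Sum>l<dB. (\<Sum>k<dB. integral\<^sup>L \<mu> (\<lambda>g. UB h $$ (i,k) * F \<sigma> g $$ (k,l) * cnj (UB h $$ (j,l)))))"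
    by (auto simp: twirl_entry[OF s] sum_distrib_right intro!: sum.cong)
  also have "\<dots> = integral\<^sup>L \<mu> (\<lambda>g. (\<Sum>l<dB. (\<Sum>k<dB. UB h $$ (i,k) * F \<sigma> g $$ (k,l) * cnj (UB h $$ (j,l)))))"
    by (rule integral_sum2[symmetric]) (use int in auto)
  also have "\<dots> = integral\<^sup>L \<mu> (\<lambda>g. (UB h * F \<sigma> g * adj (UB h)) $$ (i,j))"
    by (rule Bochner_Integration.integral_cong[OF refl])
       (simp add: conj_entry[OF F_car[OF s] UB_car ij] sum_distrib_right)
  also have "\<dots> = integral\<^sup>L \<mu> (\<lambda>g. F \<sigma> (h + g) $$ (i,j))"
    by (simp add: F_add[OF s])
  also have "\<dots> = integral\<^sup>L \<mu> (\<lambda>g. F \<sigma> g $$ (i,j))"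
    by (rule integral_transl[OF F_cont[OF s ij]])
  also have "\<dots> = ?G $$ (i,j)" by (simp add: twirl_entry[OF s ij])
  finally show "(UB h * ?G * adj (UB h)) $$ (i,j) = ?G $$ (i,j)" .
qed (use twirl_car[OF s] in auto)

lemma bf_twirl:
  assumes s: "\<sigma> \<in> carrier_mat dB dB"
  shows "bf dB (twirl \<mu> UB \<sigma>) f f = integral\<^sup>L \<mu> (\<lambda>g. bf dB (F \<sigma> g) f f)"
proof -
  have int: "\<And>k l. k < dB \<Longrightarrow> l < dB \<Longrightarrow> integrable \<mu> (\<lambda>g. F \<sigma> g $$ (k,l))" using F_int[OF s] by blast
  have "bf dB (twirl \<mu> UB \<sigma>) f f = (\<Sum>i<dB. \<Sum>j<dB. integral\<^sup>L \<mu> (\<lambda>g. cnj (f i) * F \<sigma> g $$ (i,j) * f j))"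
    unfolding bf_def by (auto simp: twirl_entry[OF s] intro!: sum.cong)
  also have "\<dots> = integral\<^sup>L \<mu> (\<lambda>g. bf dB (F \<sigma> g) f f)"
    unfolding bf_def by (rule integral_sum2[symmetric]) (use int in auto)
  finally show ?thesis .
qed

lemma support:
  assumes ps: "psd dB \<sigma>" and z: "bf dB (twirl \<mu> UB \<sigma>) f f = 0"
  shows "bf dB \<sigma> f f = 0"
proof -
  have s: "\<sigma> \<in> carrier_mat dB dB" using ps by (simp add: psd_def)
  define \<phi> where "\<phi> g = Re (bf dB (F \<sigma> g) f f)" for g
  have cont: "continuous_on UNIV \<phi>"
    unfolding \<phi>_def bf_def
    by (intro continuous_on_Re continuous_on_sum continuous_on_mult continuous_on_const F_cont[OF s]) auto
  have nn: "nonneg (bf dB (F \<sigma> g) f f)" for g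
  proof -
    have "psd dB (F \<sigma> g)" unfolding F_def by (rule psd_conj[OF ps UB_car])
    then show ?thesis by (simp add: psd_iff_bf)
  qed
  have contc: "continuous_on UNIV (\<lambda>g. bf dB (F \<sigma> g) f f)"
    unfolding bf_def
    by (intro continuous_on_sum continuous_on_mult continuous_on_const F_cont[OF s]) auto
  have int0: "integral\<^sup>L \<mu> \<phi> = 0"
  proof -
    have "integral\<^sup>L \<mu> \<phi> = Re (integral\<^sup>L \<mu> (\<lambda>g. bf dB (F \<sigma> g) f f))"
      unfolding \<phi>_def by (simp add: int_cont[OF contc])
    also have "\<dots> = 0" using z bf_twirl[OF s] by simp
    finally show ?thesis .
  qed
  have "\<phi> 0 = 0" by (rule full_support[OF cont _ int0]) (use nn in \<open>simp add: \<phi>_def nonneg_def\<close>)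
  hence "Re (bf dB \<sigma> f f) = 0" by (simp add: \<phi>_def F0[OF s])
  moreover have "Im (bf dB \<sigma> f f) = 0" using ps by (simp add: psd_iff_bf nonneg_def)
  ultimately show ?thesis by (simp add: complex_eq_iff)
qed

end


declare assoc_mult_mat[simp del]

lemma carI: "dim_row A = n \<Longrightarrow> dim_col A = m \<Longrightarrow> A \<in> carrier_mat n m"
  by (rule carrier_matI)

lemma massoc: "dim_col A = dim_row B \<Longrightarrow> dim_col B = dim_row C \<Longrightarrow> A * B * C = A * (B * C)"
  for A B C :: "complex mat"
  by (rule assoc_mult_mat[of A "dim_row A" "dim_col A" B "dim_col B" C "dim_col C"]; rule carI; simp)

lemma mdistr_r: "dim_col A = dim_row B \<Longrightarrow> dim_row B = dim_row C \<Longrightarrow> dim_col B = dim_col C \<Longrightarrow> A * (B + C) = A * B + A * C"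
  for A B C :: "complex mat"
  by (rule mult_add_distrib_mat[of A "dim_row A" "dim_col A" B "dim_col B" C]; rule carI; simp)

lemma mdistr_l: "dim_col A = dim_row C \<Longrightarrow> dim_row A = dim_row B \<Longrightarrow> dim_col A = dim_col B \<Longrightarrow> (A + B) * C = A * C + B * C"
  for A B C :: "complex mat"
  by (rule add_mult_distrib_mat[of A "dim_row A" "dim_col A" B C "dim_col C"]; rule carI; simp)

lemma mdistr_minus_l: "dim_col A = dim_row C \<Longrightarrow> dim_row A = dim_row B \<Longrightarrow> dim_col A = dim_col B \<Longrightarrow> (A - B) * C = A * C - B * C"
  for A B C :: "complex mat"
  by (rule minus_mult_distrib_mat[of A "dim_row A" "dim_col A" B C "dim_col C"]; rule carI; simp)

lemma mdistr_minus_r: "dim_col A = dim_row B \<Longrightarrow> dim_row B = dim_row C \<Longrightarrow> dim_col B = dim_col C \<Longrightarrow> A * (B - C) = A * B - A * C"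
  for A B C :: "complex mat"
  by (rule mult_minus_distrib_mat[of A "dim_row A" "dim_col A" B "dim_col B" C]; rule carI; simp)

lemma msmult_r: "dim_col A = dim_row B \<Longrightarrow> A * (c \<cdot>\<^sub>m B) = c \<cdot>\<^sub>m (A * B)"
  for A B :: "complex mat"
  by (rule mult_smult_distrib[of A "dim_row A" "dim_col A" B "dim_col B"]; rule carI; simp)

lemma msmult_l: "dim_col A = dim_row B \<Longrightarrow> (c \<cdot>\<^sub>m A) * B = c \<cdot>\<^sub>m (A * B)"
  for A B :: "complex mat"
  by (rule mult_smult_assoc_mat[of A "dim_row A" "dim_col A" B "dim_col B"]; rule carI; simp)

lemma minus_zero_mat'[simp]: "dim_row A = n \<Longrightarrow> dim_col A = m \<Longrightarrow> A - 0\<^sub>m n m = A" for A :: "complex mat"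
  by (rule eq_matI) auto

lemma sum_unit_r: "j < (d::nat) \<Longrightarrow> (\<Sum>l<d. X l * (if l = j then 1 else 0)) = (X j :: complex)"
proof -
  assume j: "j < d"
  have "(\<Sum>l<d. X l * (if l = j then 1 else 0)) = (\<Sum>l<d. if l = j then X j else 0)"
    by (rule sum.cong) auto
  also have "\<dots> = X j" using j by simp
  finally show ?thesis .
qed
lemma sum_unit_l: "j < (d::nat) \<Longrightarrow> (\<Sum>l<d. cnj (if l = j then 1 else 0) * X l) = (X j :: complex)"
proof -
  assume j: "j < d"
  have "(\<Sum>l<d. cnj (if l = j then 1 else 0) * X l) = (\<Sum>l<d. if l = j then X j else 0)"
    by (rule sum.cong) auto
  also have "\<dots> = X j" using j by simp
  finally show ?thesis .
qed

lemma zero_mult_vec[simp]: "dim_vec v = m \<Longrightarrow> 0\<^sub>m n m *\<^sub>v v = (0\<^sub>v n :: complex vec)"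
  by (rule eq_vecI) (auto simp: scalar_prod_def)

lemma mvassoc: "dim_col A = dim_row B \<Longrightarrow> dim_vec v = dim_col B \<Longrightarrow> (A * B) *\<^sub>v v = A *\<^sub>v (B *\<^sub>v v)"
  for A B :: "complex mat"
  by (rule assoc_mult_mat_vec[of A "dim_row A" "dim_col A" B "dim_col B"]; (rule carI | rule carrier_vecI); simp)

lemma minus_self_mat: "A - A = 0\<^sub>m (dim_row A) (dim_col A)" for A :: "complex mat"
  by (rule eq_matI) auto

lemma minus_eq_zero_mat: "dim_row A = dim_row B \<Longrightarrow> dim_col A = dim_col B \<Longrightarrow> A - B = 0\<^sub>m (dim_row A) (dim_col A) \<Longrightarrow> A = B"
  for A B :: "complex mat"
proof (rule eq_matI)
  fix i j assume d: "dim_row A = dim_row B" "dim_col A = dim_col B" and z: "A - B = 0\<^sub>m (dim_row A) (dim_col A)"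
    and ij: "i < dim_row B" "j < dim_col B"
  have "(A - B) $$ (i,j) = 0" using z ij d by simp
  then show "A $$ (i,j) = B $$ (i,j)" using ij by simp
qed auto

locale main_setting = rep_setting \<mu> UB dB for \<mu> :: "'g::{group_add, t2_space} measure" and UB dB +
  fixes \<sigma> V :: "complex mat" and dS :: nat
  assumes sigma: "state dB \<sigma>"
    and V_dim: "V \<in> carrier_mat dB dS"
    and V_iso: "adj V * V = 1\<^sub>m dS"
    and V_range: "supp V = supp (twirl \<mu> UB \<sigma>)"
begin

definition "P = V * adj V"
definition "Q = 1\<^sub>m dB - P"
definition "G = twirl \<mu> UB \<sigma>"
definition "W g = adj V * UB g * V"

lemma s_psd: "psd dB \<sigma>" using sigma by (simp add: state_def)
lemma s_car: "\<sigma> \<in> carrier_mat dB dB" using s_psd by (simp add: psd_def)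
lemma V_car: "V \<in> carrier_mat dB dS" by (rule V_dim)
lemma dimsV[simp]: "dim_row V = dB" "dim_col V = dS" "dim_row \<sigma> = dB" "dim_col \<sigma> = dB"
  using carrier_matD[OF V_car] carrier_matD[OF s_car] by auto
lemma dimsP[simp]: "dim_row P = dB" "dim_col P = dB" "dim_row Q = dB" "dim_col Q = dB"
  unfolding P_def Q_def by simp_all
lemma dimsG[simp]: "dim_row G = dB" "dim_col G = dB" unfolding G_def twirl_def by simp_all
lemma dimsW[simp]: "dim_row (W g) = dS" "dim_col (W g) = dS" unfolding W_def by simp_all

lemma car[simp]: "V \<in> carrier_mat dB dS" "\<sigma> \<in> carrier_mat dB dB" "P \<in> carrier_mat dB dB"
  "Q \<in> carrier_mat dB dB" "G \<in> carrier_mat dB dB" "W g \<in> carrier_mat dS dS" "adj V \<in> carrier_mat dS dB"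
  by (auto intro!: carrier_matI)

lemma VV_assoc: "dim_row X = dS \<Longrightarrow> adj V * (V * X) = X"
proof -
  assume d: "dim_row X = dS"
  have "adj V * (V * X) = (adj V * V) * X" by (rule massoc[symmetric]) (use d in auto)
  also have "\<dots> = X" using d by (simp add: V_iso)
  finally show ?thesis .
qed

lemma adjQ: "adj Q = Q"
  unfolding Q_def P_def
  by (simp add: adj_minus[of _ dB dB] adj_mult[OF V_car adj_carrier[OF V_car]] mult_carrier_mat[OF V_car adj_carrier[OF V_car]])

lemma QV: "Q * V = 0\<^sub>m dB dS"
proof -
  have "Q * V = V - V * (adj V * V)" unfolding Q_def P_def by (simp add: mdistr_minus_l massoc)
  also have "\<dots> = 0\<^sub>m dB dS" by (simp add: V_iso minus_self_mat)
  finally show ?thesis .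
qed

lemma QQ: "Q * Q = Q"
proof -
  have PQ: "P * Q = 0\<^sub>m dB dB"
  proof -
    have "P * Q = P - V * (adj V * V) * adj V" unfolding Q_def P_def by (simp add: mdistr_minus_r massoc)
    also have "\<dots> = 0\<^sub>m dB dB" by (simp add: V_iso P_def minus_self_mat)
    finally show ?thesis .
  qed
  have "Q * Q = Q - P * Q" by (subst (1) Q_def) (simp add: mdistr_minus_l)
  also have "\<dots> = Q" by (simp add: PQ)
  finally show ?thesis .
qed

lemma G_range: "y \<in> carrier_vec dB \<Longrightarrow> \<exists>z\<in>carrier_vec dS. G *\<^sub>v y = V *\<^sub>v z"
proof -
  assume y: "y \<in> carrier_vec dB"
  have "G *\<^sub>v y \<in> supp G" unfolding supp_def using y by auto
  hence "G *\<^sub>v y \<in> supp V" using V_range by (simp add: G_def)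
  then show ?thesis unfolding supp_def by auto
qed

lemma QG: "Q * G = 0\<^sub>m dB dB"
proof (rule mat_eq_vecI[of _ dB dB])
  fix y :: "complex vec" assume y: "y \<in> carrier_vec dB"
  obtain z where z: "z \<in> carrier_vec dS" "G *\<^sub>v y = V *\<^sub>v z" using G_range[OF y] by blast
  have "(Q * G) *\<^sub>v y = Q *\<^sub>v (G *\<^sub>v y)" using y by (simp add: mvassoc)
  also have "\<dots> = (Q * V) *\<^sub>v z" using z by (simp add: mvassoc)
  also have "\<dots> = 0\<^sub>v dB" using z by (simp add: QV)
  also have "\<dots> = 0\<^sub>m dB dB *\<^sub>v y" using y by simp
  finally show "(Q * G) *\<^sub>v y = 0\<^sub>m dB dB *\<^sub>v y" .
qed auto

lemma UG: "UB g * G = G * UB g"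
proof -
  have "UB g * G = UB g * G * (adj (UB g) * UB g)" by (simp add: UB_unit)
  also have "\<dots> = (UB g * G * adj (UB g)) * UB g" by (simp add: massoc)
  also have "UB g * G * adj (UB g) = G" unfolding G_def by (rule twirl_inv[OF s_car])
  finally show ?thesis .
qed

lemma QUV: "Q * UB g * V = 0\<^sub>m dB dS"
proof (rule mat_eq_vecI[of _ dB dS])
  fix z :: "complex vec" assume z: "z \<in> carrier_vec dS"
  have "V *\<^sub>v z \<in> supp V" unfolding supp_def using z by auto
  hence "V *\<^sub>v z \<in> supp G" using V_range by (simp add: G_def)
  then obtain y where y: "y \<in> carrier_vec dB" "V *\<^sub>v z = G *\<^sub>v y" unfolding supp_def by auto
  have "(Q * UB g * V) *\<^sub>v z = Q *\<^sub>v (UB g *\<^sub>v (V *\<^sub>v z))" using z by (simp add: massoc mvassoc)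
  also have "\<dots> = (Q * (UB g * G)) *\<^sub>v y" using y by (simp add: massoc mvassoc)
  also have "\<dots> = ((Q * G) * UB g) *\<^sub>v y" by (simp add: UG massoc)
  also have "\<dots> = 0\<^sub>v dB" using y by (simp add: QG)
  also have "\<dots> = 0\<^sub>m dB dS *\<^sub>v z" using z by simp
  finally show "(Q * UB g * V) *\<^sub>v z = 0\<^sub>m dB dS *\<^sub>v z" .
qed auto

lemma PUV: "P * (UB g * V) = UB g * V"
proof (rule minus_eq_zero_mat[symmetric])
  have "UB g * V - P * (UB g * V) = Q * UB g * V"
    unfolding Q_def by (simp add: mdistr_minus_l massoc)
  then show "UB g * V - P * (UB g * V) = 0\<^sub>m (dim_row (UB g * V)) (dim_col (UB g * V))"
    by (simp add: QUV)
qed auto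

lemma bf_zero: "bf d (0\<^sub>m d d) f g = 0"
  by (auto simp: bf_def intro!: sum.neutral)

lemma Q_sigma: "Q * \<sigma> = 0\<^sub>m dB dB" "\<sigma> * Q = 0\<^sub>m dB dB"
proof -
  define e where "e j = (\<lambda>l::nat. if l = j then (1::complex) else 0)" for j
  define h where "h f = (\<lambda>k. \<Sum>i<dB. cnj (Q $$ (i,k)) * f i)" for f :: "nat \<Rightarrow> complex"
  have z: "bf dB \<sigma> (h f) (h f) = 0" for f
  proof -
    have "bf dB G (h f) (h f) = bf dB (Q * G * adj Q) f f"
      unfolding h_def by (rule bf_conj[symmetric]) simp_all
    also have "\<dots> = 0" by (simp add: QG bf_zero)
    finally show ?thesis using support[OF s_psd] unfolding G_def by blast
  qed
  have hk: "h (e k) m = cnj (Q $$ (k,m))" if "k < dB" for k m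
    unfolding h_def e_def using that by (simp add: sum_unit_r)
  show "Q * \<sigma> = 0\<^sub>m dB dB"
  proof (rule eq_matI)
    fix k j assume kj: "k < dim_row (0\<^sub>m dB dB)" "j < dim_col (0\<^sub>m dB dB)"
    hence kj: "k < dB" "j < dB" by auto
    have "0 = bf dB \<sigma> (h (e k)) (e j)" using psd_zero_bf(2)[OF s_psd z] by metis
    also have "\<dots> = (\<Sum>i<dB. cnj (h (e k) i) * \<sigma> $$ (i,j))"
      unfolding bf_def e_def using kj by (simp add: sum_unit_r)
    also have "\<dots> = (\<Sum>i<dB. Q $$ (k,i) * \<sigma> $$ (i,j))" using kj by (simp add: hk)
    also have "\<dots> = (Q * \<sigma>) $$ (k,j)" by (rule mult_entry[symmetric]) (use kj in simp_all)
    finally show "(Q * \<sigma>) $$ (k,j) = 0\<^sub>m dB dB $$ (k,j)" using kj by simp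
  qed simp_all
  show "\<sigma> * Q = 0\<^sub>m dB dB"
  proof (rule eq_matI)
    fix i k assume ik: "i < dim_row (0\<^sub>m dB dB)" "k < dim_col (0\<^sub>m dB dB)"
    hence ik: "i < dB" "k < dB" by auto
    have "0 = bf dB \<sigma> (e i) (h (e k))" using psd_zero_bf(1)[OF s_psd z] by metis
    also have "\<dots> = (\<Sum>a<dB. cnj (e i a) * (\<Sum>l<dB. \<sigma> $$ (a,l) * h (e k) l))"
      unfolding bf_def by (simp add: sum_distrib_left mult.assoc)
    also have "\<dots> = (\<Sum>l<dB. \<sigma> $$ (i,l) * h (e k) l)"
      unfolding e_def by (rule sum_unit_l) (use ik in simp)
    also have "\<dots> = (\<Sum>l<dB. \<sigma> $$ (i,l) * adj Q $$ (l,k))" using ik by (simp add: hk)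
    also have "\<dots> = (\<sigma> * adj Q) $$ (i,k)" by (rule mult_entry[symmetric]) (use ik in simp_all)
    finally show "(\<sigma> * Q) $$ (i,k) = 0\<^sub>m dB dB $$ (i,k)" using ik by (simp add: adjQ)
  qed simp_all
qed

lemma P_eq: "P = 1\<^sub>m dB - Q"
  by (rule eq_matI) (auto simp: Q_def)

lemma P_sigma: "P * \<sigma> = \<sigma>" "\<sigma> * P = \<sigma>"
proof -
  have "P * \<sigma> = \<sigma> - Q * \<sigma>" unfolding P_eq by (simp add: mdistr_minus_l)
  then show "P * \<sigma> = \<sigma>" by (simp add: Q_sigma)
  have "\<sigma> * P = \<sigma> - \<sigma> * Q" unfolding P_eq by (simp add: mdistr_minus_r)
  then show "\<sigma> * P = \<sigma>" by (simp add: Q_sigma)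
qed

lemma tr_sigma: "tr \<sigma> = 1" using sigma by (simp add: state_def)

lemma dS_pos: "dS > 0"
proof (rule ccontr)
  assume "\<not> dS > 0"
  hence d0: "dS = 0" by simp
  have "P $$ (i,j) = 0" if "i < dB" "j < dB" for i j
    unfolding P_def using mult_entry[OF V_car adj_carrier[OF V_car] that] d0 by simp
  hence "(P * \<sigma>) $$ (i,i) = 0" if "i < dB" for i
    using mult_entry[OF car(3) s_car that that] that by simp
  hence "tr \<sigma> = 0" using P_sigma(1) by (simp add: tr_def)
  then show False using tr_sigma by simp
qed

lemma VW: "V * W g = UB g * V"
proof -
  have "V * W g = (V * adj V) * (UB g * V)" unfolding W_def by (simp add: massoc)
  also have "\<dots> = UB g * V" using PUV unfolding P_def .
  finally show ?thesis .
qed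

lemma adjW: "adj (W g) = W (- g)"
proof -
  have "W g = adj V * (UB g * V)" by (simp add: W_def massoc)
  hence "adj (W g) = adj (UB g * V) * V"
    by (simp add: adj_mult[OF adj_carrier[OF V_car] mult_carrier_mat[OF UB_car V_car]])
  also have "\<dots> = adj V * adj (UB g) * V" by (simp add: adj_mult[OF UB_car V_car])
  finally show ?thesis by (simp add: W_def UB_minus)
qed

lemma W_unit: "adj (W g) * W g = 1\<^sub>m dS"
proof -
  have "adj (W g) * W g = adj V * (UB (-g) * (V * W g))" unfolding adjW by (simp add: W_def massoc)
  also have "\<dots> = adj V * ((UB (-g) * UB g) * V)" by (simp add: VW massoc)
  also have "\<dots> = adj V * (UB (-g + g) * V)" by (simp only: UB_add)
  also have "\<dots> = 1\<^sub>m dS" by (simp add: UB0 V_iso)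
  finally show ?thesis .
qed

lemma W_unit': "W g * adj (W g) = 1\<^sub>m dS"
  by (rule unitary_right[OF car(6) W_unit])

lemma adjVU: "adj V * UB g = W g * adj V"
proof -
  have "V * adj (W g) = adj (UB g) * V" unfolding adjW VW UB_minus ..
  hence "adj (V * adj (W g)) = adj (adj (UB g) * V)" by simp
  then show ?thesis
    by (simp add: adj_mult[OF V_car adj_carrier[OF car(6)]] adj_mult[OF adjUB_car V_car])
qed

end


declare assoc_mult_mat[simp del]

lemma channel_CP: "channel dX dY \<Phi> \<Longrightarrow> CP dX dY \<Phi>"
  by (simp add: channel_def CP_def)

lemma CP_channel:
  assumes "CP dX dY \<Phi>"
    and "\<And>M N. M \<in> carrier_mat dX dX \<Longrightarrow> N \<in> carrier_mat dX dX \<Longrightarrow> \<Phi> (M + N) = \<Phi> M + \<Phi> N"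
    and "\<And>M c. M \<in> carrier_mat dX dX \<Longrightarrow> \<Phi> (c \<cdot>\<^sub>m M) = c \<cdot>\<^sub>m \<Phi> M"
    and "\<And>M. M \<in> carrier_mat dX dX \<Longrightarrow> tr (\<Phi> M) = tr M"
  shows "channel dX dY \<Phi>"
  using assms by (simp add: channel_def CP_def)

context main_setting
begin

lemma W_eq: "(\<lambda>g. adj V * UB g * V) = W"
  by (rule ext) (simp add: W_def)

lemma VW_assoc: "dim_row X = dS \<Longrightarrow> V * (W g * X) = UB g * (V * X)"
proof -
  assume d: "dim_row X = dS"
  have "V * (W g * X) = (V * W g) * X" by (rule massoc[symmetric]) (use d in simp_all)
  also have "\<dots> = (UB g * V) * X" by (simp add: VW)
  also have "\<dots> = UB g * (V * X)" by (rule massoc) (use d in simp_all)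
  finally show ?thesis .
qed

lemma adjW_adjV: "adj (W g) * adj V = adj V * adj (UB g)"
proof -
  have "adj (W g) * adj V = adj (V * W g)" by (simp add: adj_mult[OF V_car car(6)])
  also have "\<dots> = adj V * adj (UB g)" by (simp add: VW adj_mult[OF UB_car V_car])
  finally show ?thesis .
qed

lemma adjUV: "adj (UB g) * V = V * adj (W g)"
proof -
  have "adj (adj V * UB g) = adj (W g * adj V)" by (simp add: adjVU)
  then show ?thesis by (simp add: adj_mult[OF adj_carrier[OF V_car] UB_car] adj_mult[OF car(6) adj_carrier[OF V_car]])
qed

lemma adjVU_assoc: "dim_row X = dB \<Longrightarrow> adj V * (UB g * X) = W g * (adj V * X)"
proof -
  assume d: "dim_row X = dB"
  have "adj V * (UB g * X) = (adj V * UB g) * X" by (rule massoc[symmetric]) (use d in simp_all)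
  also have "\<dots> = (W g * adj V) * X" by (simp add: adjVU)
  also have "\<dots> = W g * (adj V * X)" by (rule massoc) (use d in simp_all)
  finally show ?thesis .
qed

lemma tr_conj_unitary:
  assumes U: "U \<in> carrier_mat n n" "adj U * U = 1\<^sub>m n" and X: "X \<in> carrier_mat n n"
  shows "tr (U * X * adj U) = tr X"
proof -
  have "tr (U * X * adj U) = tr (U * (X * adj U))" by (simp add: massoc[of U X] carrier_matD[OF U(1)] carrier_matD[OF X])
  also have "\<dots> = tr ((X * adj U) * U)" by (rule tr_mult_comm[OF U(1)]) (use X U in simp)
  also have "\<dots> = tr (X * (adj U * U))" by (simp add: massoc carrier_matD[OF U(1)] carrier_matD[OF X])
  also have "\<dots> = tr X" using U X by simp
  finally show ?thesis .
qed

lemma rev_dir: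
  assumes cov: "cov_channel dA dS UA W \<Psi>" and rho: "\<rho> \<in> carrier_mat dA dA"
    and img: "\<Psi> \<rho> = adj V * \<sigma> * V"
  shows "\<exists>\<Phi>. cov_channel dA dB UA UB \<Phi> \<and> \<Phi> \<rho> = \<sigma>"
proof -
  have ch: "channel dA dS \<Psi>" using cov by (simp add: cov_channel_def)
  have Pc: "\<And>M. M \<in> carrier_mat dA dA \<Longrightarrow> \<Psi> M \<in> carrier_mat dS dS" using ch by (simp add: channel_def)
  have Pd: "\<And>M. M \<in> carrier_mat dA dA \<Longrightarrow> dim_row (\<Psi> M) = dS \<and> dim_col (\<Psi> M) = dS"
    using Pc carrier_matD by blast
  have Padd: "\<And>M N. M \<in> carrier_mat dA dA \<Longrightarrow> N \<in> carrier_mat dA dA \<Longrightarrow> \<Psi> (M + N) = \<Psi> M + \<Psi> N"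
    using ch by (simp add: channel_def)
  have Psm: "\<And>M c. M \<in> carrier_mat dA dA \<Longrightarrow> \<Psi> (c \<cdot>\<^sub>m M) = c \<cdot>\<^sub>m \<Psi> M"
    using ch by (simp add: channel_def)
  have Ptr: "\<And>M. M \<in> carrier_mat dA dA \<Longrightarrow> tr (\<Psi> M) = tr M"
    using ch by (simp add: channel_def)
  have Pcov: "\<And>g M. M \<in> carrier_mat dA dA \<Longrightarrow> \<Psi> (UA g * M * adj (UA g)) = W g * \<Psi> M * adj (W g)"
    using cov by (simp add: cov_channel_def)
  define \<Phi> where "\<Phi> X = V * \<Psi> X * adj V" for X
  have CPs: "CP dA dS \<Psi>" by (rule channel_CP[OF ch])
  have CPf: "CP dA dB \<Phi>"
    by (rule CP_kraus[OF CPs, of "{()}" "\<lambda>_. V"]) (auto simp: \<Phi>_def Pc)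
  have "channel dA dB \<Phi>"
  proof (rule CP_channel[OF CPf])
    fix M N :: "complex mat" assume M: "M \<in> carrier_mat dA dA" and N: "N \<in> carrier_mat dA dA"
    show "\<Phi> (M + N) = \<Phi> M + \<Phi> N"
      unfolding \<Phi>_def Padd[OF M N] using Pd[OF M] Pd[OF N] by (simp add: massoc mdistr_l mdistr_r)
  next
    fix M :: "complex mat" and c assume M: "M \<in> carrier_mat dA dA"
    show "\<Phi> (c \<cdot>\<^sub>m M) = c \<cdot>\<^sub>m \<Phi> M"
      unfolding \<Phi>_def Psm[OF M] using Pd[OF M] by (simp add: massoc msmult_l msmult_r)
  next
    fix M :: "complex mat" assume M: "M \<in> carrier_mat dA dA"
    have "tr (\<Phi> M) = tr (V * (\<Psi> M * adj V))" unfolding \<Phi>_def using Pd[OF M] by (simp add: massoc)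
    also have "\<dots> = tr ((\<Psi> M * adj V) * V)" by (rule tr_mult_comm[OF V_car]) (use Pc[OF M] in simp)
    also have "\<dots> = tr (\<Psi> M)" using Pd[OF M] by (simp add: massoc V_iso)
    also have "\<dots> = tr M" by (rule Ptr[OF M])
    finally show "tr (\<Phi> M) = tr M" .
  qed
  moreover have "\<Phi> (UA g * M * adj (UA g)) = UB g * \<Phi> M * adj (UB g)" if M: "M \<in> carrier_mat dA dA" for g M
  proof -
    have "\<Phi> (UA g * M * adj (UA g)) = V * (W g * \<Psi> M * adj (W g)) * adj V" unfolding \<Phi>_def Pcov[OF M] ..
    also have "\<dots> = V * (W g * (\<Psi> M * (adj (W g) * adj V)))" using Pd[OF M] by (simp add: massoc)
    also have "\<dots> = UB g * (V * (\<Psi> M * (adj V * adj (UB g))))"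
      using Pd[OF M] by (simp add: adjW_adjV VW_assoc)
    also have "\<dots> = UB g * \<Phi> M * adj (UB g)" unfolding \<Phi>_def using Pd[OF M] by (simp add: massoc)
    finally show ?thesis .
  qed
  moreover have "\<Phi> \<rho> = \<sigma>"
  proof -
    have "\<Phi> \<rho> = (V * adj V) * \<sigma> * (V * adj V)" unfolding \<Phi>_def img by (simp add: massoc)
    also have "\<dots> = \<sigma>" using P_sigma unfolding P_def by simp
    finally show ?thesis .
  qed
  ultimately show ?thesis unfolding cov_channel_def by blast
qed

definition cs :: complex where "cs = of_real (1 / sqrt (real dS))"
definition Km :: "nat \<Rightarrow> nat \<Rightarrow> complex mat" where
  "Km r s = mat dS dB (\<lambda>(i,k). if i = s then cs * Q $$ (r,k) else 0)"

lemma Km_car: "Km r s \<in> carrier_mat dS dB" by (simp add: Km_def)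

lemma cs_sq: "cs * cnj cs = 1 / of_nat dS"
proof -
  have sq: "sqrt (real dS) * sqrt (real dS) = real dS" by simp
  have "cs * cnj cs = of_real ((1 / sqrt (real dS)) * (1 / sqrt (real dS)))"
    unfolding cs_def complex_cnj_complex_of_real of_real_mult ..
  also have "(1 / sqrt (real dS)) * (1 / sqrt (real dS)) = 1 / real dS"
    using sq by (simp add: divide_simps)
  also have "(of_real (1 / real dS) :: complex) = 1 / of_nat dS" by (simp add: of_real_divide)
  finally show ?thesis .
qed

lemma Km_entry:
  assumes Y: "Y \<in> carrier_mat dB dB" and r: "r < dB" and s: "s < dS" and ij: "i < dS" "j < dS"
  shows "(Km r s * Y * adj (Km r s)) $$ (i,j) = (if i = s \<and> j = s then (Q * Y * adj Q) $$ (r,r) / of_nat dS else 0)"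
proof -
  have "(Km r s * Y * adj (Km r s)) $$ (i,j) = (\<Sum>l<dB. (\<Sum>k<dB. Km r s $$ (i,k) * Y $$ (k,l)) * cnj (Km r s $$ (j,l)))"
    by (rule conj_entry[OF Y Km_car ij])
  also have "\<dots> = (if i = s \<and> j = s then (cs * cnj cs) * (\<Sum>l<dB. (\<Sum>k<dB. Q $$ (r,k) * Y $$ (k,l)) * cnj (Q $$ (r,l))) else 0)"
    using ij by (auto simp: Km_def sum_distrib_left sum_distrib_right mult_ac intro!: sum.cong)
  also have "(\<Sum>l<dB. (\<Sum>k<dB. Q $$ (r,k) * Y $$ (k,l)) * cnj (Q $$ (r,l))) = (Q * Y * adj Q) $$ (r,r)"
    by (rule conj_entry[symmetric, OF Y car(4) r r])
  finally show ?thesis by (simp add: cs_sq)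
qed

lemma tr_QYQ:
  assumes Y: "Y \<in> carrier_mat dB dB"
  shows "tr (Q * Y * adj Q) = tr Y - tr (adj V * Y * V)"
proof -
  have dY: "dim_row Y = dB" "dim_col Y = dB" using carrier_matD[OF Y] by auto
  have "tr (Q * Y * adj Q) = tr (Q * (Y * Q))" using dY by (simp add: adjQ massoc)
  also have "\<dots> = tr ((Y * Q) * Q)" by (rule tr_mult_comm[OF car(4)]) (use Y in simp)
  also have "\<dots> = tr (Y * Q)" using dY by (simp add: massoc QQ)
  also have "\<dots> = tr (Y - Y * P)" unfolding Q_def using dY by (simp add: mdistr_minus_r)
  also have "\<dots> = tr Y - tr (Y * P)" by (rule tr_minus[OF Y mult_carrier_mat[OF Y car(3)]])
  also have "tr (Y * P) = tr ((Y * V) * adj V)" unfolding P_def using dY by (simp add: massoc)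
  also have "\<dots> = tr (adj V * (Y * V))" by (rule tr_mult_comm[OF mult_carrier_mat[OF Y V_car] adj_carrier[OF V_car]])
  also have "\<dots> = tr (adj V * Y * V)" using dY by (simp add: massoc)
  finally show ?thesis .
qed

definition cc :: "(complex mat \<Rightarrow> complex mat) \<Rightarrow> complex mat \<Rightarrow> complex" where
  "cc \<Phi> X = (tr (\<Phi> X) - tr (adj V * \<Phi> X * V)) / of_nat dS"

definition Psi :: "(complex mat \<Rightarrow> complex mat) \<Rightarrow> complex mat \<Rightarrow> complex mat" where
  "Psi \<Phi> X = adj V * \<Phi> X * V + cc \<Phi> X \<cdot>\<^sub>m 1\<^sub>m dS"

lemma Psi_car: "Psi \<Phi> X \<in> carrier_mat dS dS"
  unfolding Psi_def by (rule carI) simp_all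

lemma Psi_dims[simp]: "dim_row (Psi \<Phi> X) = dS" "dim_col (Psi \<Phi> X) = dS"
  unfolding Psi_def by simp_all

lemma Psi_entry: "i < dS \<Longrightarrow> j < dS \<Longrightarrow>
   Psi \<Phi> X $$ (i,j) = (adj V * \<Phi> X * V) $$ (i,j) + (if i = j then cc \<Phi> X else 0)"
  unfolding Psi_def by simp

lemma fwd_dir:
  assumes cov: "cov_channel dA dB UA UB \<Phi>" and rho: "\<rho> \<in> carrier_mat dA dA"
    and img: "\<Phi> \<rho> = \<sigma>"
  shows "\<exists>\<Psi>. cov_channel dA dS UA W \<Psi> \<and> \<Psi> \<rho> = adj V * \<sigma> * V"
proof -
  have ch: "channel dA dB \<Phi>" using cov by (simp add: cov_channel_def)
  have Pc: "\<And>M. M \<in> carrier_mat dA dA \<Longrightarrow> \<Phi> M \<in> carrier_mat dB dB" using ch by (simp add: channel_def)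
  have Pd: "\<And>M. M \<in> carrier_mat dA dA \<Longrightarrow> dim_row (\<Phi> M) = dB \<and> dim_col (\<Phi> M) = dB"
    using Pc carrier_matD by blast
  have Padd: "\<And>M N. M \<in> carrier_mat dA dA \<Longrightarrow> N \<in> carrier_mat dA dA \<Longrightarrow> \<Phi> (M + N) = \<Phi> M + \<Phi> N"
    using ch by (simp add: channel_def)
  have Psm: "\<And>M c. M \<in> carrier_mat dA dA \<Longrightarrow> \<Phi> (c \<cdot>\<^sub>m M) = c \<cdot>\<^sub>m \<Phi> M"
    using ch by (simp add: channel_def)
  have Ptr: "\<And>M. M \<in> carrier_mat dA dA \<Longrightarrow> tr (\<Phi> M) = tr M"
    using ch by (simp add: channel_def)
  have Pcov: "\<And>g M. M \<in> carrier_mat dA dA \<Longrightarrow> \<Phi> (UA g * M * adj (UA g)) = UB g * \<Phi> M * adj (UB g)"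
    using cov by (simp add: cov_channel_def)
  let ?\<Psi> = "Psi \<Phi>"
  have CPs: "CP dA dB \<Phi>" by (rule channel_CP[OF ch])
  define R where "R = insert None (Some ` ({..<dB} \<times> {..<dS}))"
  define Kf where "Kf x = (case x of None \<Rightarrow> adj V | Some (r,s) \<Rightarrow> Km r s)" for x
  have CPf: "CP dA dS ?\<Psi>"
  proof (rule CP_kraus[OF CPs, of R Kf])
    show "finite R" unfolding R_def by simp
    show "\<And>r. r \<in> R \<Longrightarrow> Kf r \<in> carrier_mat dS dB" unfolding R_def Kf_def by (auto simp: Km_car)
    show "\<And>X. X \<in> carrier_mat dA dA \<Longrightarrow> ?\<Psi> X \<in> carrier_mat dS dS" by (rule Psi_car)
    fix X :: "complex mat" and i j assume X: "X \<in> carrier_mat dA dA" and ij: "i < dS" "j < dS"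
    let ?Y = "\<Phi> X"
    have Y: "?Y \<in> carrier_mat dB dB" by (rule Pc[OF X])
    have "(\<Sum>x\<in>R. (Kf x * ?Y * adj (Kf x)) $$ (i,j))
        = (adj V * ?Y * V) $$ (i,j) + (\<Sum>p\<in>{..<dB} \<times> {..<dS}. (Km (fst p) (snd p) * ?Y * adj (Km (fst p) (snd p))) $$ (i,j))"
      unfolding R_def
      by (subst sum.insert) (auto simp: Kf_def sum.reindex inj_on_def split_beta)
    also have "(\<Sum>p\<in>{..<dB} \<times> {..<dS}. (Km (fst p) (snd p) * ?Y * adj (Km (fst p) (snd p))) $$ (i,j))
        = (\<Sum>r<dB. \<Sum>s<dS. (Km r s * ?Y * adj (Km r s)) $$ (i,j))"
      by (simp only: sum.cartesian_product) (rule sum.cong, auto)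
    also have "\<dots> = (\<Sum>r<dB. \<Sum>s<dS. if i = s \<and> j = s then (Q * ?Y * adj Q) $$ (r,r) / of_nat dS else 0)"
      using ij by (auto simp: Km_entry[OF Y] intro!: sum.cong)
    also have "\<dots> = (\<Sum>r<dB. if i = j then (Q * ?Y * adj Q) $$ (r,r) / of_nat dS else 0)"
    proof (rule sum.cong[OF refl])
      fix r assume "r \<in> {..<dB}"
      have "(\<Sum>s<dS. if i = s \<and> j = s then (Q * ?Y * adj Q) $$ (r,r) / of_nat dS else 0)
          = (\<Sum>s<dS. if s = i then (if i = j then (Q * ?Y * adj Q) $$ (r,r) / of_nat dS else 0) else 0)"
        by (rule sum.cong) auto
      also have "\<dots> = (if i = j then (Q * ?Y * adj Q) $$ (r,r) / of_nat dS else 0)" using ij by simp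
      finally show "(\<Sum>s<dS. if i = s \<and> j = s then (Q * ?Y * adj Q) $$ (r,r) / of_nat dS else 0)
          = (if i = j then (Q * ?Y * adj Q) $$ (r,r) / of_nat dS else 0)" .
    qed
    also have "\<dots> = (if i = j then tr (Q * ?Y * adj Q) / of_nat dS else 0)"
      by (auto simp: tr_def sum_divide_distrib Y)
    also have "\<dots> = (if i = j then cc \<Phi> X else 0)" by (simp add: tr_QYQ[OF Y] cc_def)
    finally show "?\<Psi> X $$ (i,j) = (\<Sum>x\<in>R. (Kf x * ?Y * adj (Kf x)) $$ (i,j))"
      using ij by (simp add: Psi_entry)
  qed
  have "channel dA dS ?\<Psi>"
  proof (rule CP_channel[OF CPf])
    fix M N :: "complex mat" assume M: "M \<in> carrier_mat dA dA" and N: "N \<in> carrier_mat dA dA"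
    have e1: "adj V * \<Phi> (M + N) * V = adj V * \<Phi> M * V + adj V * \<Phi> N * V"
      unfolding Padd[OF M N] using Pd[OF M] Pd[OF N] by (simp add: massoc mdistr_l mdistr_r)
    have t1: "tr (adj V * \<Phi> (M + N) * V) = tr (adj V * \<Phi> M * V) + tr (adj V * \<Phi> N * V)"
      unfolding e1 by (rule tr_add[of _ dS]; rule carI) (use Pd[OF M] Pd[OF N] in simp_all)
    have t2: "tr (\<Phi> (M + N)) = tr (\<Phi> M) + tr (\<Phi> N)"
      unfolding Padd[OF M N] by (rule tr_add[OF Pc[OF M] Pc[OF N]])
    have e2: "cc \<Phi> (M + N) = cc \<Phi> M + cc \<Phi> N"
      unfolding cc_def t1 t2 by (simp add: diff_divide_distrib add_divide_distrib)
    show "?\<Psi> (M + N) = ?\<Psi> M + ?\<Psi> N"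
      by (rule eq_matI) (auto simp: Psi_entry e1 e2 add_ac)
  next
    fix M :: "complex mat" and c assume M: "M \<in> carrier_mat dA dA"
    have e1: "adj V * \<Phi> (c \<cdot>\<^sub>m M) * V = c \<cdot>\<^sub>m (adj V * \<Phi> M * V)"
      unfolding Psm[OF M] using Pd[OF M] by (simp add: massoc msmult_l msmult_r)
    have t1: "tr (adj V * \<Phi> (c \<cdot>\<^sub>m M) * V) = c * tr (adj V * \<Phi> M * V)"
      unfolding e1 by (rule tr_smult[of _ dS]; rule carI) (use Pd[OF M] in simp_all)
    have t2: "tr (\<Phi> (c \<cdot>\<^sub>m M)) = c * tr (\<Phi> M)"
      unfolding Psm[OF M] by (rule tr_smult[OF Pc[OF M]])
    have e2: "cc \<Phi> (c \<cdot>\<^sub>m M) = c * cc \<Phi> M"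
      unfolding cc_def t1 t2 by (simp add: right_diff_distrib[symmetric])
    show "?\<Psi> (c \<cdot>\<^sub>m M) = c \<cdot>\<^sub>m ?\<Psi> M"
    proof (rule eq_matI)
      fix i j assume "i < dim_row (c \<cdot>\<^sub>m ?\<Psi> M)" "j < dim_col (c \<cdot>\<^sub>m ?\<Psi> M)"
      hence ij: "i < dS" "j < dS" by simp_all
      define a where "a = (adj V * \<Phi> M * V) $$ (i,j)"
      have "?\<Psi> (c \<cdot>\<^sub>m M) $$ (i,j) = (c \<cdot>\<^sub>m (adj V * \<Phi> M * V)) $$ (i,j) + (if i = j then c * cc \<Phi> M else 0)"
        using ij by (simp only: Psi_entry e1 e2)
      also have "(c \<cdot>\<^sub>m (adj V * \<Phi> M * V)) $$ (i,j) = c * a"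
        unfolding a_def by (rule index_smult_mat(1)) (use ij in simp_all)
      also have "c * a + (if i = j then c * cc \<Phi> M else 0) = c * (a + (if i = j then cc \<Phi> M else 0))"
        by (simp add: distrib_left)
      also have "a + (if i = j then cc \<Phi> M else 0) = ?\<Psi> M $$ (i,j)"
        unfolding a_def using ij by (simp only: Psi_entry)
      also have "c * ?\<Psi> M $$ (i,j) = (c \<cdot>\<^sub>m ?\<Psi> M) $$ (i,j)"
        by (rule index_smult_mat(1)[symmetric]) (use ij in simp_all)
      finally show "?\<Psi> (c \<cdot>\<^sub>m M) $$ (i,j) = (c \<cdot>\<^sub>m ?\<Psi> M) $$ (i,j)" .
    qed simp_all
  next
    fix M :: "complex mat" assume M: "M \<in> carrier_mat dA dA"
    have "tr (?\<Psi> M) = tr (adj V * \<Phi> M * V) + tr (cc \<Phi> M \<cdot>\<^sub>m 1\<^sub>m dS)"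
      unfolding Psi_def by (rule tr_add[of _ dS]; rule carI) (use Pd[OF M] in simp_all)
    also have "tr (cc \<Phi> M \<cdot>\<^sub>m 1\<^sub>m dS) = cc \<Phi> M * of_nat dS"
      by (simp add: tr_smult[of _ dS] tr_one)
    also have "cc \<Phi> M * of_nat dS = tr (\<Phi> M) - tr (adj V * \<Phi> M * V)"
      unfolding cc_def using dS_pos by simp
    finally show "tr (?\<Psi> M) = tr M" using Ptr[OF M] by simp
  qed
  moreover have "?\<Psi> (UA g * M * adj (UA g)) = W g * ?\<Psi> M * adj (W g)" if M: "M \<in> carrier_mat dA dA" for g M
  proof -
    let ?Y = "\<Phi> M"
    have Y: "?Y \<in> carrier_mat dB dB" by (rule Pc[OF M])
    have dY: "dim_row ?Y = dB" "dim_col ?Y = dB" using Pd[OF M] by auto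
    have A: "adj V * (UB g * ?Y * adj (UB g)) * V = W g * (adj V * ?Y * V) * adj (W g)"
      using dY by (simp add: massoc adjVU_assoc adjUV)
    have t1: "tr (UB g * ?Y * adj (UB g)) = tr ?Y" by (rule tr_conj_unitary[OF UB_car UB_unit Y])
    have t2: "tr (W g * (adj V * ?Y * V) * adj (W g)) = tr (adj V * ?Y * V)"
      by (rule tr_conj_unitary[OF car(6) W_unit]) (rule carI, use dY in simp_all)
    have C: "cc \<Phi> (UA g * M * adj (UA g)) = cc \<Phi> M"
      unfolding cc_def Pcov[OF M] A t1 t2 ..
    have "?\<Psi> (UA g * M * adj (UA g)) = W g * (adj V * ?Y * V) * adj (W g) + cc \<Phi> M \<cdot>\<^sub>m 1\<^sub>m dS"
      unfolding Psi_def C Pcov[OF M] A ..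
    also have "\<dots> = W g * (adj V * ?Y * V + cc \<Phi> M \<cdot>\<^sub>m 1\<^sub>m dS) * adj (W g)"
      using dY by (simp add: massoc mdistr_l mdistr_r msmult_l msmult_r W_unit')
    also have "\<dots> = W g * ?\<Psi> M * adj (W g)" unfolding Psi_def ..
    finally show ?thesis .
  qed
  moreover have "?\<Psi> \<rho> = adj V * \<sigma> * V"
  proof -
    have "tr (adj V * \<sigma> * V) = tr (\<sigma> * V * adj V)"
    proof -
      have "tr (adj V * \<sigma> * V) = tr (adj V * (\<sigma> * V))" by (simp add: massoc)
      also have "\<dots> = tr ((\<sigma> * V) * adj V)" by (rule tr_mult_comm[OF car(7) mult_carrier_mat[OF s_car V_car]])
      finally show ?thesis .
    qed
    also have "\<dots> = tr \<sigma>" using P_sigma(2) unfolding P_def by (simp add: massoc)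
    finally have "cc \<Phi> \<rho> = 0" unfolding cc_def img by simp
    then show ?thesis by (intro eq_matI) (auto simp: Psi_entry img)
  qed
  ultimately show ?thesis unfolding cov_channel_def by blast
qed

end


theorem lemma7:
  fixes \<mu> :: "'g::{group_add, t2_space} measure"
    and UA UB :: "'g \<Rightarrow> complex mat"
    and dA dB dS :: nat
    and \<rho> \<sigma> V :: "complex mat"
  assumes cpt: "compact (UNIV :: 'g set)"
    and mult_cont: "continuous_on UNIV (\<lambda>p :: 'g \<times> 'g. fst p + snd p)"
    and inv_cont: "continuous_on UNIV (uminus :: 'g \<Rightarrow> 'g)"
    and haar: "haar_prob \<mu>"
    and repA: "unitary_rep dA UA"
    and repB: "unitary_rep dB UB"
    and rho: "state dA \<rho>"
    and sigma: "state dB \<sigma>"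
    and V_dim: "V \<in> carrier_mat dB dS"
    and V_iso: "adj V * V = 1\<^sub>m dS"
    and V_range: "supp V = supp (twirl \<mu> UB \<sigma>)"
  shows "(\<exists>\<Phi>. cov_channel dA dB UA UB \<Phi> \<and> \<Phi> \<rho> = \<sigma>) \<longleftrightarrow>
         (\<exists>\<Psi>. cov_channel dA dS UA (\<lambda>g. adj V * UB g * V) \<Psi> \<and> \<Psi> \<rho> = adj V * \<sigma> * V)"
proof -
  interpret M: main_setting \<mu> UB dB \<sigma> V dS
    by unfold_locales (rule cpt mult_cont haar repB sigma V_dim V_iso V_range)+
  have rhoc: "\<rho> \<in> carrier_mat dA dA" using rho by (simp add: state_def psd_def)
  show ?thesis
  proof
    assume "\<exists>\<Phi>. cov_channel dA dB UA UB \<Phi> \<and> \<Phi> \<rho> = \<sigma>"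
    then obtain \<Phi> where "cov_channel dA dB UA UB \<Phi>" "\<Phi> \<rho> = \<sigma>" by blast
    then obtain \<Psi> where "cov_channel dA dS UA M.W \<Psi>" "\<Psi> \<rho> = adj V * \<sigma> * V"
      using M.fwd_dir[OF _ rhoc] by blast
    then show "\<exists>\<Psi>. cov_channel dA dS UA (\<lambda>g. adj V * UB g * V) \<Psi> \<and> \<Psi> \<rho> = adj V * \<sigma> * V"
      unfolding M.W_eq by blast
  next
    assume "\<exists>\<Psi>. cov_channel dA dS UA (\<lambda>g. adj V * UB g * V) \<Psi> \<and> \<Psi> \<rho> = adj V * \<sigma> * V"
    then obtain \<Psi> where "cov_channel dA dS UA M.W \<Psi>" "\<Psi> \<rho> = adj V * \<sigma> * V"
      unfolding M.W_eq by blast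
    then show "\<exists>\<Phi>. cov_channel dA dB UA UB \<Phi> \<and> \<Phi> \<rho> = \<sigma>"
      using M.rev_dir[OF _ rhoc] by blast
  qed
qed

end
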